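(* Let $\beta$ be generic and $x_k(t)$ smooth with $\dot x_k^2\neq1$, $\wp'(x_k)\ne0$; put $u_k=\wp(x_k)$. Then $$\frac{\dot x_k-1}{\dot x_k+1}=\frac{F(x_k,x_{k+1};\beta)}{F(x_k,x_{k-1};\beta)}\ \ \forall k\quad\iff\quad \dot u_k=\frac{2\rho(u_{k+1},u_k,u_{k-1};\beta)}{u_{k+1}-u_{k-1}}\ \ \forall k.$$
   Context: $\wp,\sigma$: Weierstrass functions (invariants $g_2,g_3$, nondegenerate). $F(x_0,x_1;\alpha)=\frac{\sigma(x_0+x_1+\alpha)\sigma(x_0-x_1+\alpha)}{\sigma(x_0+x_1-\alpha)\sigma(x_0-x_1-\alpha)}$. For $u,w\in\mathbb C$ and $v=\wp(z)$ define $$\rho(u,v,w;\beta)=\frac{(\wp(z)-\wp(\beta))^2}{\wp'(\beta)}\Big(uw-\big(\wp(z+\beta)+\wp(z-\beta)\big)\frac{u+w}{2}+\wp(z+\beta)\wp(z-\beta)\Big).$$ *)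

theory Defs
  imports "HOL-Analysis.Analysis"
begin

definition lattice :: "complex \<Rightarrow> complex \<Rightarrow> complex set" where
  "lattice w1 w2 = {of_int m * w1 + of_int n * w2 | m n. True}"

definition wp :: "complex \<Rightarrow> complex \<Rightarrow> complex \<Rightarrow> complex" where
  "wp w1 w2 z = 1 / z^2 + infsum (\<lambda>\<omega>. 1 / (z - \<omega>)^2 - 1 / \<omega>^2) (lattice w1 w2 - {0})"

definition wsigma :: "complex \<Rightarrow> complex \<Rightarrow> complex \<Rightarrow> complex" where
  "wsigma w1 w2 z = z * Lim (finite_subsets_at_top (lattice w1 w2 - {0}))
     (\<lambda>S. \<Prod>\<omega>\<in>S. (1 - z / \<omega>) * exp (z / \<omega> + z^2 / (2 * \<omega>^2)))"

definition Fsig :: "complex \<Rightarrow> complex \<Rightarrow> complex \<Rightarrow> complex \<Rightarrow> complex \<Rightarrow> complex" where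
  "Fsig w1 w2 x0 x1 \<alpha> =
     (wsigma w1 w2 (x0 + x1 + \<alpha>) * wsigma w1 w2 (x0 - x1 + \<alpha>)) /
     (wsigma w1 w2 (x0 + x1 - \<alpha>) * wsigma w1 w2 (x0 - x1 - \<alpha>))"

text \<open>rho(u, v, w; beta) with v = wp(z); the argument z is the chosen preimage
  (the expression only depends on wp(z)).\<close>
definition rho :: "complex \<Rightarrow> complex \<Rightarrow> complex \<Rightarrow> complex \<Rightarrow> complex \<Rightarrow> complex \<Rightarrow> complex" where
  "rho w1 w2 u z w \<beta> =
     (wp w1 w2 z - wp w1 w2 \<beta>)^2 / deriv (wp w1 w2) \<beta> *
     (u * w - (wp w1 w2 (z + \<beta>) + wp w1 w2 (z - \<beta>)) * (u + w) / 2
        + wp w1 w2 (z + \<beta>) * wp w1 w2 (z - \<beta>))"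

definition tdot :: "(real \<Rightarrow> complex) \<Rightarrow> real \<Rightarrow> complex" where
  "tdot f t = vector_derivative f (at t)"

definition smooth_on :: "real set \<Rightarrow> (real \<Rightarrow> complex) \<Rightarrow> bool" where
  "smooth_on T f \<longleftrightarrow> (\<forall>n. \<forall>t\<in>T. ((\<lambda>g. tdot g) ^^ n) f differentiable (at t))"

text \<open>Genericity of beta: beta avoids the exceptional values at which some quantity in
  the statement is undefined (a pole of wp or of wp', a zero of wp'(beta), a zero of
  some sigma-factor in F).\<close>
definition generic_beta :: "complex \<Rightarrow> complex \<Rightarrow> (int \<Rightarrow> real \<Rightarrow> complex) \<Rightarrow> real set \<Rightarrow> complex \<Rightarrow> bool" where
  "generic_beta w1 w2 x T \<beta> \<longleftrightarrow>
     \<beta> \<notin> lattice w1 w2 \<and> deriv (wp w1 w2) \<beta> \<noteq> 0 \<and>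
     (\<forall>k. \<forall>t\<in>T. x k t + \<beta> \<notin> lattice w1 w2 \<and> x k t - \<beta> \<notin> lattice w1 w2) \<and>
     (\<forall>k. \<forall>t\<in>T.
        x k t + x (k + 1) t + \<beta> \<notin> lattice w1 w2 \<and>
        x k t + x (k + 1) t - \<beta> \<notin> lattice w1 w2 \<and>
        x k t - x (k + 1) t + \<beta> \<notin> lattice w1 w2 \<and>
        x k t - x (k + 1) t - \<beta> \<notin> lattice w1 w2)"

end

theory Submission
  imports Defs "HOL-Complex_Analysis.Complex_Analysis"
begin

lemma infsum_tail_small:
  fixes M :: "'i \<Rightarrow> real"
  assumes "M summable_on I" "\<And>i. i \<in> I \<Longrightarrow> M i \<ge> 0" "e > 0"
  shows "\<forall>\<^sub>F S in finite_subsets_at_top I. infsum M (I - S) < e"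
proof -
  have hs: "(M has_sum infsum M I) I" using assms(1) by (simp add: has_sum_infsum)
  hence "(sum M \<longlongrightarrow> infsum M I) (finite_subsets_at_top I)" by (simp add: has_sum_def)
  hence ev: "\<forall>\<^sub>F S in finite_subsets_at_top I. dist (sum M S) (infsum M I) < e"
    using assms(3) tendstoD by blast
  have ev2: "\<forall>\<^sub>F S in finite_subsets_at_top I. finite S \<and> S \<subseteq> I"
    by (simp add: eventually_finite_subsets_at_top_weakI)
  show ?thesis
  proof (rule eventually_mono[OF eventually_conj[OF ev ev2]])
    fix S assume S: "dist (sum M S) (infsum M I) < e \<and> finite S \<and> S \<subseteq> I"
    have "infsum M I = infsum M (S \<union> (I - S))" using S by (metis Un_Diff_cancel sup.absorb2)
    also have "\<dots> = infsum M S + infsum M (I - S)"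
      by (rule infsum_Un_disjoint) (use S summable_on_subset_banach[OF assms(1)] in auto)
    finally have "infsum M (I - S) = infsum M I - sum M S" using S by simp
    thus "infsum M (I - S) < e" using S by (simp add: dist_real_def abs_less_iff)
  qed
qed

lemma holo_infsum:
  fixes f f' :: "'i \<Rightarrow> complex \<Rightarrow> complex" and M :: "'i \<Rightarrow> real"
  assumes M: "M summable_on I" and r: "0 < r"
    and der: "\<And>i w. i \<in> I \<Longrightarrow> w \<in> cball z r \<Longrightarrow> (f i has_field_derivative f' i w) (at w)"
    and bd: "\<And>i w. i \<in> I \<Longrightarrow> w \<in> cball z r \<Longrightarrow> norm (f i w) \<le> M i"
    and w: "w \<in> ball z r"
  shows "((\<lambda>w. infsum (\<lambda>i. f i w) I) has_field_derivative infsum (\<lambda>i. f' i w) I) (at w) \<and> (\<lambda>i. f' i w) summable_on I"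
proof -
  have M0: "\<And>i. i \<in> I \<Longrightarrow> M i \<ge> 0" using bd[of _ z] r by (meson centre_in_cball less_imp_le norm_ge_zero order_trans)
  have Mabs: "(\<lambda>i. norm (M i)) summable_on J" if "J \<subseteq> I" for J
  proof -
    have "M summable_on J" using summable_on_subset_banach[OF M that] .
    thus ?thesis by (rule summable_on_cong[THEN iffD1, rotated]) (use M0 that in auto)
  qed
  have fs: "(\<lambda>i. norm (f i u)) summable_on J" if "J \<subseteq> I" "u \<in> cball z r" for J u
    by (rule Infinite_Sum.abs_summable_on_comparison_test'[OF summable_on_subset_banach[OF M that(1)]]) (use bd that in auto)
  have ev2: "\<forall>\<^sub>F S in finite_subsets_at_top I. finite S \<and> S \<subseteq> I"
    by (simp add: eventually_finite_subsets_at_top_weakI)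
  have ul: "uniform_limit (cball z r) (\<lambda>S u. \<Sum>i\<in>S. f i u) (\<lambda>u. infsum (\<lambda>i. f i u) I) (finite_subsets_at_top I)"
  proof (rule uniform_limitI)
    fix e :: real assume e: "e > 0"
    have ev2: "\<forall>\<^sub>F S in finite_subsets_at_top I. finite S \<and> S \<subseteq> I"
      by (simp add: eventually_finite_subsets_at_top_weakI)
    show "\<forall>\<^sub>F S in finite_subsets_at_top I. \<forall>u\<in>cball z r. dist (\<Sum>i\<in>S. f i u) (infsum (\<lambda>i. f i u) I) < e"
    proof (rule eventually_mono[OF eventually_conj[OF infsum_tail_small[OF M M0 e] ev2]])
      fix S assume S: "infsum M (I - S) < e \<and> finite S \<and> S \<subseteq> I"
      show "\<forall>u\<in>cball z r. dist (\<Sum>i\<in>S. f i u) (infsum (\<lambda>i. f i u) I) < e"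
      proof
        fix u assume u: "u \<in> cball z r"
        have "infsum (\<lambda>i. f i u) I = infsum (\<lambda>i. f i u) (S \<union> (I - S))" using S by (metis Un_Diff_cancel sup.absorb2)
        also have "\<dots> = infsum (\<lambda>i. f i u) S + infsum (\<lambda>i. f i u) (I - S)"
          by (rule infsum_Un_disjoint) (use S abs_summable_summable[OF fs[OF _ u]] in auto)
        finally have eq: "infsum (\<lambda>i. f i u) I - (\<Sum>i\<in>S. f i u) = infsum (\<lambda>i. f i u) (I - S)" using S by simp
        have "norm (infsum (\<lambda>i. f i u) (I - S)) \<le> infsum (\<lambda>i. norm (f i u)) (I - S)"
          by (rule norm_infsum_bound) (use fs[OF _ u] in auto)
        also have "\<dots> \<le> infsum M (I - S)"
          by (rule infsum_mono) (use fs[OF _ u] summable_on_subset_banach[OF M] bd u in auto)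
        finally show "dist (\<Sum>i\<in>S. f i u) (infsum (\<lambda>i. f i u) I) < e"
          using S eq by (metis dist_norm dist_commute order_le_less_trans)
      qed
    qed
  qed
  have cont: "\<forall>\<^sub>F S in finite_subsets_at_top I. continuous_on (cball z r) (\<lambda>u. \<Sum>i\<in>S. f i u) \<and>
       (\<forall>w \<in> ball z r. ((\<lambda>u. \<Sum>i\<in>S. f i u) has_field_derivative (\<Sum>i\<in>S. f' i w)) (at w))"
  proof (rule eventually_mono[OF ev2])
    fix S assume S: "finite S \<and> S \<subseteq> I"
    have d: "((\<lambda>u. \<Sum>i\<in>S. f i u) has_field_derivative (\<Sum>i\<in>S. f' i w)) (at w)" if "w \<in> cball z r" for w
      by (rule DERIV_sum) (use der S that in auto)
    show "continuous_on (cball z r) (\<lambda>u. \<Sum>i\<in>S. f i u) \<and>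
       (\<forall>w \<in> ball z r. ((\<lambda>u. \<Sum>i\<in>S. f i u) has_field_derivative (\<Sum>i\<in>S. f' i w)) (at w))"
      using d by (auto intro!: continuous_at_imp_continuous_on DERIV_continuous)
  qed
  obtain g' where g': "\<And>w. w \<in> ball z r \<Longrightarrow> ((\<lambda>u. infsum (\<lambda>i. f i u) I) has_field_derivative (g' w)) (at w) \<and> ((\<lambda>S. \<Sum>i\<in>S. f' i w) \<longlongrightarrow> g' w) (finite_subsets_at_top I)"
    using has_complex_derivative_uniform_limit[OF cont ul _ r] by auto
  have "((\<lambda>i. f' i w) has_sum g' w) I" using g'[OF w] by (simp add: has_sum_def)
  hence "infsum (\<lambda>i. f' i w) I = g' w" "(\<lambda>i. f' i w) summable_on I" by (auto simp add: infsumI summable_on_def)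
  thus ?thesis using g'[OF w] by simp
qed


definition apow :: "int \<Rightarrow> real" where "apow m = (max 1 \<bar>real_of_int m\<bar>) powr (-3/2)"

lemma apow_pos: "apow m > 0" by (simp add: apow_def)

lemma apow_summable: "apow summable_on UNIV"
proof -
  define b where "b = (\<lambda>n::nat. (max 1 (real n)) powr (-3/2))"
  have "summable (\<lambda>n::nat. real n powr (-3/2))" by (subst summable_real_powr_iff) simp
  moreover have "\<forall>\<^sub>F n in sequentially. real n powr (-3/2) = b n"
    using eventually_ge_at_top[of "1::nat"] by eventually_elim (auto simp: b_def max_def)
  ultimately have "summable b" using summable_cong by fastforce
  hence bs: "b summable_on UNIV" by (subst summable_on_UNIV_nonneg_real_iff) (auto simp: b_def)
  have 1: "apow summable_on (of_nat ` UNIV)"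
  proof (subst summable_on_reindex)
    show "inj_on (of_nat :: nat \<Rightarrow> int) UNIV" by (simp add: inj_on_def)
    have "apow \<circ> of_nat = b" by (auto simp: apow_def b_def fun_eq_iff)
    thus "(apow \<circ> of_nat) summable_on UNIV" using bs by simp
  qed
  have 2: "apow summable_on ((\<lambda>n. - of_nat n) ` UNIV)"
  proof (subst summable_on_reindex)
    show "inj_on (\<lambda>n::nat. - (of_nat n :: int)) UNIV" by (simp add: inj_on_def)
    have "apow \<circ> (\<lambda>n::nat. - (of_nat n :: int)) = b" by (auto simp: apow_def b_def fun_eq_iff)
    thus "(apow \<circ> (\<lambda>n::nat. - (of_nat n :: int))) summable_on UNIV" using bs by simp
  qed
  have "(UNIV::int set) = (of_nat ` UNIV) \<union> ((\<lambda>n. - of_nat n) ` (UNIV::nat set))"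
  proof (rule set_eqI)
    fix m :: int show "m \<in> UNIV \<longleftrightarrow> m \<in> (of_nat ` UNIV) \<union> ((\<lambda>n. - of_nat n) ` (UNIV::nat set))"
    proof (cases "m \<ge> 0")
      case True hence "m = of_nat (nat m)" by simp thus ?thesis by blast
    next
      case False hence "m = - of_nat (nat (-m))" by simp thus ?thesis by blast
    qed
  qed
  thus ?thesis using summable_on_union[OF 1 2] by simp
qed

lemma apow_prod_summable: "(\<lambda>(m,n). apow m * apow n) summable_on UNIV"
proof -
  have "(\<lambda>(m,n). apow m * apow n) summable_on Sigma UNIV (\<lambda>_. UNIV)"
  proof (rule summable_on_SigmaI[where g = "\<lambda>m. apow m * infsum apow UNIV"])
    show "((\<lambda>y. case (x, y) of (m, n) \<Rightarrow> apow m * apow n) has_sum apow x * infsum apow UNIV) UNIV" for x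
      using has_sum_cmult_right[OF has_sum_infsum[OF apow_summable]] by simp
    show "(\<lambda>m. apow m * infsum apow UNIV) summable_on UNIV"
      using summable_on_cmult_left[OF apow_summable] by simp
  qed (auto simp: apow_pos less_imp_le)
  thus ?thesis by simp
qed

lemma apow_bound:
  fixes m n :: int assumes "(m, n) \<noteq> (0, 0)"
  shows "1 / (\<bar>real_of_int m\<bar> + \<bar>real_of_int n\<bar>) ^ 3 \<le> apow m * apow n"
proof -
  define A where "A = max 1 \<bar>real_of_int m\<bar>"
  define B where "B = max 1 \<bar>real_of_int n\<bar>"
  define s where "s = \<bar>real_of_int m\<bar> + \<bar>real_of_int n\<bar>"
  have s1: "s \<ge> 1" using assms by (auto simp: s_def)
  have AB: "A * B \<le> s ^ 2"
  proof -
    consider "m = 0" | "n = 0" | "m \<noteq> 0" "n \<noteq> 0" by blast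
    thus ?thesis
    proof cases
      case 1
      hence "n \<noteq> 0" using assms by auto
      hence "1 \<le> \<bar>n\<bar>" by linarith
      hence n1: "\<bar>real_of_int n\<bar> \<ge> 1" by (metis of_int_1_le_iff of_int_abs)
      have "A = 1" "B = \<bar>real_of_int n\<bar>" "s = \<bar>real_of_int n\<bar>" using 1 n1 by (auto simp: A_def B_def s_def)
      moreover have "\<bar>real_of_int n\<bar> \<le> \<bar>real_of_int n\<bar> * \<bar>real_of_int n\<bar>" using mult_left_mono[OF n1, of "\<bar>real_of_int n\<bar>"] by simp
      ultimately show ?thesis by (simp add: power2_eq_square abs_mult_self_eq)
    next
      case 2
      hence "m \<noteq> 0" using assms by auto
      hence "1 \<le> \<bar>m\<bar>" by linarith
      hence n1: "\<bar>real_of_int m\<bar> \<ge> 1" by (metis of_int_1_le_iff of_int_abs)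
      have "B = 1" "A = \<bar>real_of_int m\<bar>" "s = \<bar>real_of_int m\<bar>" using 2 n1 by (auto simp: A_def B_def s_def)
      moreover have "\<bar>real_of_int m\<bar> \<le> \<bar>real_of_int m\<bar> * \<bar>real_of_int m\<bar>" using mult_left_mono[OF n1, of "\<bar>real_of_int m\<bar>"] by simp
      ultimately show ?thesis by (simp add: power2_eq_square abs_mult_self_eq)
    next
      case 3
      hence "A = \<bar>real_of_int m\<bar>" "B = \<bar>real_of_int n\<bar>" by (auto simp: A_def B_def max_def)
      thus ?thesis by (simp add: s_def power2_eq_square algebra_simps)
    qed
  qed
  have A1: "A \<ge> 1" "B \<ge> 1" by (auto simp: A_def B_def)
  have "apow m * apow n = (A * B) powr (-3/2)" by (simp add: apow_def A_def[symmetric] B_def[symmetric] powr_mult)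
  also have "\<dots> \<ge> (s ^ 2) powr (-3/2)"
    by (rule powr_mono2') (use AB A1 in auto)
  hence "(s ^ 2) powr (-3/2) \<le> (A * B) powr (-3/2)" .
  moreover have "(s ^ 2) powr (-3/2) = 1 / s ^ 3"
  proof -
    have "s ^ 2 = s powr 2" using s1 by (simp add: powr_numeral)
    hence "(s ^ 2) powr (-3/2) = s powr (2 * (-3/2))" by (simp add: powr_powr)
    also have "\<dots> = s powr (- 3)" by simp
    also have "\<dots> = 1 / s ^ 3" using s1 by (simp add: powr_minus powr_realpow divide_inverse)
    finally show ?thesis .
  qed
  ultimately show ?thesis by (simp add: s_def apow_def A_def B_def powr_mult)
qed


locale wlat =
  fixes w1 w2 :: complex
  assumes tau_im: "Im (w2 / w1) \<noteq> 0"
begin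

abbreviation "Lt \<equiv> lattice w1 w2"
abbreviation "Ls \<equiv> lattice w1 w2 - {0}"

definition lp :: "int \<Rightarrow> int \<Rightarrow> complex" where "lp m n = of_int m * w1 + of_int n * w2"

lemma w1_nz: "w1 \<noteq> 0" using tau_im by auto

lemma lattice_iff: "z \<in> Lt \<longleftrightarrow> (\<exists>m n. z = lp m n)"
  by (auto simp: lattice_def lp_def)

lemma lat_0[simp]: "0 \<in> Lt" unfolding lattice_iff by (rule exI[of _ 0], rule exI[of _ 0]) (simp add: lp_def)
lemma lat_w1[simp]: "w1 \<in> Lt" unfolding lattice_iff by (rule exI[of _ 1], rule exI[of _ 0]) (simp add: lp_def)
lemma lat_w2[simp]: "w2 \<in> Lt" unfolding lattice_iff by (rule exI[of _ 0], rule exI[of _ 1]) (simp add: lp_def)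
lemma lp_add: "lp m n + lp m' n' = lp (m + m') (n + n')"
  by (simp add: lp_def algebra_simps)
lemma lp_uminus: "- lp m n = lp (-m) (-n)"
  by (simp add: lp_def algebra_simps)
lemma lat_add: "a \<in> Lt \<Longrightarrow> b \<in> Lt \<Longrightarrow> a + b \<in> Lt"
  unfolding lattice_iff using lp_add by blast
lemma lat_uminus: "a \<in> Lt \<Longrightarrow> - a \<in> Lt"
  unfolding lattice_iff using lp_uminus by blast
lemma lat_uminus_iff[simp]: "- a \<in> Lt \<longleftrightarrow> a \<in> Lt"
  using lat_uminus[of a] lat_uminus[of "-a"] by auto
lemma lat_diff: "a \<in> Lt \<Longrightarrow> b \<in> Lt \<Longrightarrow> a - b \<in> Lt"
  using lat_add[of a "-b"] by simp
lemma lat_add_iff1: "b \<in> Lt \<Longrightarrow> a + b \<in> Lt \<longleftrightarrow> a \<in> Lt"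
  using lat_add lat_diff by force
lemma lat_diff_iff1: "b \<in> Lt \<Longrightarrow> a - b \<in> Lt \<longleftrightarrow> a \<in> Lt"
  using lat_add lat_diff by force
lemma lat_lp[simp]: "lp m n \<in> Lt" unfolding lattice_iff by blast

definition Cl :: real where
  "Cl = cmod w1 * \<bar>Im (w2/w1)\<bar> / (cmod (w2/w1) + 1 + \<bar>Im (w2/w1)\<bar>)"

lemma Cl_pos: "Cl > 0"
proof -
  have "cmod (w2/w1) + 1 + \<bar>Im (w2/w1)\<bar> > 0" using norm_ge_zero[of "w2/w1"] abs_ge_zero[of "Im (w2/w1)"] by linarith
  moreover have "cmod w1 * \<bar>Im (w2/w1)\<bar> > 0" using tau_im w1_nz by simp
  ultimately show ?thesis unfolding Cl_def by (rule divide_pos_pos[rotated])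
qed

lemma int_pair_ge1: "(m::int, n) \<noteq> (0, 0) \<Longrightarrow> 1 \<le> \<bar>real_of_int m\<bar> + \<bar>real_of_int n\<bar>"
proof -
  assume "(m, n) \<noteq> (0, 0)"
  hence "1 \<le> \<bar>m\<bar> + \<bar>n\<bar>" by auto
  hence "1 \<le> real_of_int (\<bar>m\<bar> + \<bar>n\<bar>)" by linarith
  thus ?thesis by simp
qed

lemma lat_lower: "Cl * (\<bar>s\<bar> + \<bar>t\<bar>) \<le> cmod (of_real s * w1 + of_real t * w2)"
proof -
  define \<tau> where "\<tau> = w2 / w1"
  define X where "X = cmod (of_real s + of_real t * \<tau>)"
  have eq: "of_real s * w1 + of_real t * w2 = w1 * (of_real s + of_real t * \<tau>)"
    using w1_nz by (simp add: \<tau>_def field_simps)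
  have i: "\<bar>t\<bar> * \<bar>Im \<tau>\<bar> \<le> X"
  proof -
    have "Im (of_real s + of_real t * \<tau>) = t * Im \<tau>" by simp
    moreover have "\<bar>Im (of_real s + of_real t * \<tau>)\<bar> \<le> X" unfolding X_def by (rule abs_Im_le_cmod)
    ultimately show ?thesis by (simp add: abs_mult)
  qed
  have ii: "\<bar>s\<bar> \<le> X + \<bar>t\<bar> * cmod \<tau>"
  proof -
    have "\<bar>s\<bar> = cmod ((of_real s + of_real t * \<tau>) - of_real t * \<tau>)" by simp
    also have "\<dots> \<le> X + cmod (of_real t * \<tau>)" unfolding X_def by (rule norm_triangle_ineq4)
    finally show ?thesis by (simp add: norm_mult)
  qed
  have p: "\<bar>Im \<tau>\<bar> > 0" using tau_im by (simp add: \<tau>_def)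
  have "\<bar>s\<bar> * \<bar>Im \<tau>\<bar> \<le> X * \<bar>Im \<tau>\<bar> + \<bar>t\<bar> * \<bar>Im \<tau>\<bar> * cmod \<tau>"
    using mult_right_mono[OF ii, of "\<bar>Im \<tau>\<bar>"] by (simp add: algebra_simps)
  also have "\<dots> \<le> X * \<bar>Im \<tau>\<bar> + X * cmod \<tau>"
    using mult_right_mono[OF i, of "cmod \<tau>"] by simp
  finally have "(\<bar>s\<bar> + \<bar>t\<bar>) * \<bar>Im \<tau>\<bar> \<le> X * (cmod \<tau> + 1 + \<bar>Im \<tau>\<bar>)"
    using i by (simp add: algebra_simps)
  moreover have "cmod \<tau> + 1 + \<bar>Im \<tau>\<bar> > 0" using norm_ge_zero[of \<tau>] abs_ge_zero[of "Im \<tau>"] by linarith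
  ultimately have "(\<bar>s\<bar> + \<bar>t\<bar>) * \<bar>Im \<tau>\<bar> / (cmod \<tau> + 1 + \<bar>Im \<tau>\<bar>) \<le> X"
    by (simp add: pos_divide_le_eq)
  hence "cmod w1 * ((\<bar>s\<bar> + \<bar>t\<bar>) * \<bar>Im \<tau>\<bar> / (cmod \<tau> + 1 + \<bar>Im \<tau>\<bar>)) \<le> cmod w1 * X"
    by (rule mult_left_mono) simp
  thus ?thesis unfolding eq norm_mult Cl_def \<tau>_def[symmetric] X_def[symmetric]
    by (simp add: field_simps)
qed

lemma lp_lower: "Cl * (\<bar>real_of_int m\<bar> + \<bar>real_of_int n\<bar>) \<le> cmod (lp m n)"
  using lat_lower[of "real_of_int m" "real_of_int n"] by (simp add: lp_def)

lemma lp_diff: "lp m n - lp m' n' = lp (m - m') (n - n')"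
  by (simp add: lp_def algebra_simps)

lemma lp_inj: "lp m n = lp m' n' \<Longrightarrow> m = m' \<and> n = n'"
proof -
  assume "lp m n = lp m' n'"
  hence "lp (m - m') (n - n') = 0" using lp_diff[of m n m' n'] by simp
  hence "Cl * (\<bar>real_of_int (m - m')\<bar> + \<bar>real_of_int (n - n')\<bar>) \<le> 0" using lp_lower[of "m - m'" "n - n'"] by simp
  hence "\<bar>real_of_int (m - m')\<bar> + \<bar>real_of_int (n - n')\<bar> \<le> 0" using Cl_pos by (simp add: mult_le_0_iff)
  hence "real_of_int (m - m') = 0" "real_of_int (n - n') = 0" by linarith+
  thus ?thesis by simp
qed

lemma lp_0_iff: "lp m n = 0 \<longleftrightarrow> m = 0 \<and> n = 0"
  using lp_inj[of m n 0 0] by (auto simp: lp_def)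

lemma lat_norm_ge: "\<omega> \<in> Lt \<Longrightarrow> \<omega> \<noteq> 0 \<Longrightarrow> cmod \<omega> \<ge> Cl"
proof -
  assume "\<omega> \<in> Lt" "\<omega> \<noteq> 0"
  then obtain m n where mn: "\<omega> = lp m n" "(m, n) \<noteq> (0, 0)" using lattice_iff lp_0_iff by force
  have "1 \<le> \<bar>real_of_int m\<bar> + \<bar>real_of_int n\<bar>" using int_pair_ge1[OF mn(2)] .
  hence "Cl * 1 \<le> Cl * (\<bar>real_of_int m\<bar> + \<bar>real_of_int n\<bar>)" using Cl_pos by (intro mult_left_mono) auto
  thus ?thesis using lp_lower[of m n] mn by simp
qed

lemma lat_sep: "a \<in> Lt \<Longrightarrow> b \<in> Lt \<Longrightarrow> a \<noteq> b \<Longrightarrow> cmod (a - b) \<ge> Cl"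
  using lat_norm_ge[of "a - b"] lat_diff by auto

lemma Ls_image: "Ls = (\<lambda>(m, n). lp m n) ` (UNIV - {(0, 0)})"
proof (intro set_eqI iffI)
  fix \<omega> assume "\<omega> \<in> Ls"
  then obtain m n where mn: "\<omega> = lp m n" "\<omega> \<noteq> 0" by (auto simp: lattice_iff)
  hence "(m, n) \<in> UNIV - {(0, 0)}" using lp_0_iff by auto
  thus "\<omega> \<in> (\<lambda>(m, n). lp m n) ` (UNIV - {(0, 0)})" using mn(1) by force
next
  fix \<omega> assume "\<omega> \<in> (\<lambda>(m, n). lp m n) ` (UNIV - {(0, 0)})"
  then obtain m n where "(m, n) \<noteq> (0, 0)" "\<omega> = lp m n" by auto
  thus "\<omega> \<in> Ls" using lp_0_iff by auto
qed

lemma inj_lp: "inj_on (\<lambda>(m, n). lp m n) A"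
  by (auto simp: inj_on_def dest: lp_inj)

lemma countable_Lt: "countable Lt"
proof -
  have "Lt = (\<lambda>(m, n). lp m n) ` UNIV" by (force simp: lattice_iff)
  thus ?thesis by simp
qed

lemma summable_cube: "(\<lambda>\<omega>. 1 / cmod \<omega> ^ 3) summable_on Ls"
proof -
  have "((\<lambda>\<omega>. 1 / cmod \<omega> ^ 3) \<circ> (\<lambda>(m, n). lp m n)) summable_on (UNIV - {(0, 0)})"
  proof (rule summable_on_comparison_test)
    show "(\<lambda>(m,n). apow m * apow n / Cl ^ 3) summable_on (UNIV - {(0, 0)})"
      using summable_on_subset_banach[OF summable_on_cmult_left[OF apow_prod_summable, of "1 / Cl ^ 3"]]
      by (simp add: case_prod_unfold)
    fix x :: "int \<times> int" assume x: "x \<in> UNIV - {(0, 0)}"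
    obtain m n where xmn: "x = (m, n)" by fastforce
    have mn: "(m, n) \<noteq> (0, 0)" using x xmn by simp
    define s where "s = \<bar>real_of_int m\<bar> + \<bar>real_of_int n\<bar>"
    have s1: "s \<ge> 1" using int_pair_ge1[OF mn] by (simp add: s_def)
    have lo: "Cl * s \<le> cmod (lp m n)" using lp_lower by (simp add: s_def)
    have pos: "Cl * s > 0" using Cl_pos s1 by simp
    have pos2: "cmod (lp m n) > 0" using lo pos by linarith
    have "0 < cmod (lp m n) ^ 3 * (Cl * s) ^ 3" using pos pos2 by simp
    moreover have "(Cl * s) ^ 3 \<le> cmod (lp m n) ^ 3" using lo pos by (intro power_mono) auto
    ultimately have "1 / cmod (lp m n) ^ 3 \<le> 1 / (Cl * s) ^ 3"
      by (intro divide_left_mono) auto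
    also have "\<dots> = (1 / s ^ 3) / Cl ^ 3" by (simp add: power_mult_distrib)
    also have "\<dots> \<le> apow m * apow n / Cl ^ 3"
      by (rule divide_right_mono) (use apow_bound[OF mn] Cl_pos in \<open>auto simp: s_def\<close>)
    finally show "((\<lambda>\<omega>. 1 / cmod \<omega> ^ 3) \<circ> (\<lambda>(m, n). lp m n)) x \<le> (\<lambda>(m,n). apow m * apow n / Cl ^ 3) x"
      by (simp add: xmn)
    show "0 \<le> ((\<lambda>\<omega>. 1 / cmod \<omega> ^ 3) \<circ> (\<lambda>(m, n). lp m n)) x" by (simp add: case_prod_unfold)
  qed
  thus ?thesis unfolding Ls_image by (subst summable_on_reindex[OF inj_lp])
qed

lemma finite_lat_ball: "finite {\<omega> \<in> Lt. cmod \<omega> \<le> R}"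
proof -
  define N where "N = ceiling (R / Cl)"
  have "{\<omega> \<in> Lt. cmod \<omega> \<le> R} \<subseteq> (\<lambda>(m, n). lp m n) ` ({-N..N} \<times> {-N..N})"
  proof
    fix \<omega> assume "\<omega> \<in> {\<omega> \<in> Lt. cmod \<omega> \<le> R}"
    then obtain m n where mn: "\<omega> = lp m n" "cmod (lp m n) \<le> R" by (auto simp: lattice_iff)
    have "Cl * (\<bar>real_of_int m\<bar> + \<bar>real_of_int n\<bar>) \<le> R" using lp_lower[of m n] mn by linarith
    hence "\<bar>real_of_int m\<bar> + \<bar>real_of_int n\<bar> \<le> R / Cl" using Cl_pos by (simp add: le_divide_eq mult.commute)
    hence "\<bar>real_of_int m\<bar> \<le> R / Cl" "\<bar>real_of_int n\<bar> \<le> R / Cl" by auto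
    hence "real_of_int \<bar>m\<bar> \<le> R / Cl" "real_of_int \<bar>n\<bar> \<le> R / Cl" by simp_all
    hence "\<bar>m\<bar> \<le> N" "\<bar>n\<bar> \<le> N" unfolding N_def by (simp_all add: le_ceiling_iff)
    hence "m \<in> {-N..N}" "n \<in> {-N..N}" by auto
    thus "\<omega> \<in> (\<lambda>(m, n). lp m n) ` ({-N..N} \<times> {-N..N})" using mn by force
  qed
  thus ?thesis by (rule finite_subset) auto
qed

lemma finite_lat_ball': "finite {\<omega> \<in> Lt. cmod (\<omega> - z) \<le> R}"
proof (rule finite_subset[OF _ finite_lat_ball[of "R + cmod z"]])
  show "{\<omega> \<in> Lt. cmod (\<omega> - z) \<le> R} \<subseteq> {\<omega> \<in> Lt. cmod \<omega> \<le> R + cmod z}"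
  proof safe
    fix \<omega> assume "cmod (\<omega> - z) \<le> R"
    moreover have "cmod \<omega> \<le> cmod (\<omega> - z) + cmod z" using norm_triangle_ineq[of "\<omega> - z" z] by simp
    ultimately show "cmod \<omega> \<le> R + cmod z" by linarith
  qed
qed

lemma closed_Lt: "closed Lt"
proof -
  have "open (- Lt)" unfolding open_contains_ball
  proof (rule ballI)
    fix z assume z: "z \<in> - Lt"
    define A where "A = {\<omega> \<in> Lt. cmod (\<omega> - z) \<le> 1}"
    have "finite A" unfolding A_def by (rule finite_lat_ball')
    hence "closed A" by (rule finite_imp_closed)
    moreover have "z \<notin> A" using z by (auto simp: A_def)
    hence "z \<in> - A" by simp
    moreover have "open (- A)" using \<open>closed A\<close> by (simp add: open_Compl)
    ultimately obtain e where e: "e > 0" "ball z e \<subseteq> - A"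
      using open_contains_ball by blast
    show "\<exists>e>0. ball z e \<subseteq> - Lt"
    proof (intro exI conjI)
      show "min e 1 > 0" using e by simp
      show "ball z (min e 1) \<subseteq> - Lt"
      proof
        fix y assume y: "y \<in> ball z (min e 1)"
        hence "y \<in> ball z e" "cmod (y - z) \<le> 1" by (auto simp: dist_norm norm_minus_commute)
        hence "y \<notin> A" using e by auto
        thus "y \<in> - Lt" using \<open>cmod (y - z) \<le> 1\<close> by (auto simp: A_def)
      qed
    qed
  qed
  thus ?thesis by (simp add: closed_open)
qed

lemma open_nlat: "open (- Lt)" using closed_Lt by (simp add: open_Compl)
lemma open_nLs: "open (- Ls)"
proof -
  have "Ls = Lt \<inter> {\<omega>. Cl \<le> cmod \<omega>}" using lat_norm_ge Cl_pos by force
  moreover have "closed {\<omega>. Cl \<le> cmod \<omega>}" by (intro closed_Collect_le continuous_intros)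
  ultimately have "closed Ls" using closed_Lt by (simp add: closed_Int)
  thus ?thesis by (rule open_Compl)
qed

lemma connected_nlat: "connected (- Lt)"
proof -
  have "connected (UNIV - Lt)"
    by (rule connected_open_diff_countable) (auto simp: countable_Lt)
  thus ?thesis by (simp add: Compl_eq_Diff_UNIV)
qed

end

context wlat begin

definition Tl :: "real \<Rightarrow> complex set" where "Tl R = {\<omega> \<in> Ls. 2 * R \<le> cmod \<omega>}"

lemma Tl_sub: "Tl R \<subseteq> Ls" by (auto simp: Tl_def)

lemma finite_Ls_Tl: "finite (Ls - Tl R)"
  by (rule finite_subset[OF _ finite_lat_ball[of "2 * R"]]) (auto simp: Tl_def)

lemma cube_summable_on: "B \<subseteq> Ls \<Longrightarrow> (\<lambda>\<omega>. K / cmod \<omega> ^ 3) summable_on B"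
  using summable_on_subset_banach[OF summable_on_cmult_left[OF summable_cube, of K]] by simp

lemma lat_tail_summable:
  fixes f :: "complex \<Rightarrow> complex \<Rightarrow> complex"
  assumes K: "\<And>\<omega> z. \<omega> \<in> Ls \<Longrightarrow> cmod z \<le> R \<Longrightarrow> 2 * R \<le> cmod \<omega> \<Longrightarrow> cmod (f \<omega> z) \<le> K / cmod \<omega> ^ 3"
    and z: "cmod z \<le> R"
  shows "(\<lambda>\<omega>. f \<omega> z) summable_on Tl R"
proof -
  have "(\<lambda>\<omega>. norm (f \<omega> z)) summable_on Tl R"
    by (rule Infinite_Sum.abs_summable_on_comparison_test'[OF cube_summable_on[OF Tl_sub]])
       (use K z in \<open>auto simp: Tl_def\<close>)
  thus ?thesis by (rule abs_summable_summable)
qed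

lemma lat_summable:
  fixes f :: "complex \<Rightarrow> complex \<Rightarrow> complex"
  assumes K: "\<And>\<omega> z. \<omega> \<in> Ls \<Longrightarrow> cmod z \<le> R \<Longrightarrow> 2 * R \<le> cmod \<omega> \<Longrightarrow> cmod (f \<omega> z) \<le> K / cmod \<omega> ^ 3"
    and z: "cmod z \<le> R"
  shows "(\<lambda>\<omega>. f \<omega> z) summable_on Ls"
proof -
  have "Ls = (Ls - Tl R) \<union> Tl R" using Tl_sub by auto
  moreover have "(\<lambda>\<omega>. f \<omega> z) summable_on (Ls - Tl R)" by (rule summable_on_finite[OF finite_Ls_Tl])
  moreover have "(\<lambda>\<omega>. f \<omega> z) summable_on Tl R" by (rule lat_tail_summable[OF K z])
  ultimately show ?thesis using summable_on_union by metis
qed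

lemma lat_split:
  fixes f :: "complex \<Rightarrow> complex \<Rightarrow> complex"
  assumes "(\<lambda>\<omega>. f \<omega> z) summable_on Tl R"
  shows "infsum (\<lambda>\<omega>. f \<omega> z) Ls = (\<Sum>\<omega>\<in>Ls - Tl R. f \<omega> z) + infsum (\<lambda>\<omega>. f \<omega> z) (Tl R)"
proof -
  have "Ls = (Ls - Tl R) \<union> Tl R" using Tl_sub by auto
  hence "infsum (\<lambda>\<omega>. f \<omega> z) Ls = infsum (\<lambda>\<omega>. f \<omega> z) ((Ls - Tl R) \<union> Tl R)" by simp
  also have "\<dots> = infsum (\<lambda>\<omega>. f \<omega> z) (Ls - Tl R) + infsum (\<lambda>\<omega>. f \<omega> z) (Tl R)"
    using infsum_Un_disjoint[of "\<lambda>\<omega>. f \<omega> z" "Ls - Tl R" "Tl R"] assms summable_on_finite[OF finite_Ls_Tl] by auto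
  finally show ?thesis using finite_Ls_Tl by simp
qed

lemma lat_tail_deriv:
  fixes f f' :: "complex \<Rightarrow> complex \<Rightarrow> complex"
  assumes R: "R > 0"
    and K: "\<And>\<omega> z. \<omega> \<in> Ls \<Longrightarrow> cmod z \<le> R \<Longrightarrow> 2 * R \<le> cmod \<omega> \<Longrightarrow> cmod (f \<omega> z) \<le> K / cmod \<omega> ^ 3"
    and D: "\<And>\<omega> z. \<omega> \<in> Ls \<Longrightarrow> cmod z \<le> R \<Longrightarrow> 2 * R \<le> cmod \<omega> \<Longrightarrow> (f \<omega> has_field_derivative f' \<omega> z) (at z)"
    and z: "cmod z < R"
  shows "((\<lambda>z. infsum (\<lambda>\<omega>. f \<omega> z) (Tl R)) has_field_derivative infsum (\<lambda>\<omega>. f' \<omega> z) (Tl R)) (at z)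
         \<and> (\<lambda>\<omega>. f' \<omega> z) summable_on Tl R"
  by (rule holo_infsum[where f=f and f'=f' and z=0 and I="Tl R", OF cube_summable_on[where K=K, OF Tl_sub] R])
     (use K D z in \<open>auto simp: Tl_def\<close>)

lemma lat_deriv:
  fixes f f' :: "complex \<Rightarrow> complex \<Rightarrow> complex" and z0 :: complex
  assumes K: "\<And>R. R > 0 \<Longrightarrow> \<exists>K. \<forall>\<omega> z. \<omega> \<in> Ls \<longrightarrow> cmod z \<le> R \<longrightarrow> 2 * R \<le> cmod \<omega> \<longrightarrow> cmod (f \<omega> z) \<le> K / cmod \<omega> ^ 3"
    and D: "\<And>\<omega> z. \<omega> \<in> Ls \<Longrightarrow> z \<noteq> \<omega> \<Longrightarrow> (f \<omega> has_field_derivative f' \<omega> z) (at z)"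
    and z0: "z0 \<notin> Ls"
  shows "((\<lambda>z. infsum (\<lambda>\<omega>. f \<omega> z) Ls) has_field_derivative infsum (\<lambda>\<omega>. f' \<omega> z0) Ls) (at z0)
         \<and> (\<lambda>\<omega>. f' \<omega> z0) summable_on Ls"
proof -
  define R where "R = cmod z0 + 1"
  have R: "R > 0" unfolding R_def using norm_ge_zero[of z0] by linarith
  obtain KK where KK: "\<And>\<omega> z. \<omega> \<in> Ls \<Longrightarrow> cmod z \<le> R \<Longrightarrow> 2 * R \<le> cmod \<omega> \<Longrightarrow> cmod (f \<omega> z) \<le> KK / cmod \<omega> ^ 3"
    using K[OF R] by blast
  have D': "(f \<omega> has_field_derivative f' \<omega> z) (at z)" if "\<omega> \<in> Ls" "cmod z \<le> R" "2 * R \<le> cmod \<omega>" for \<omega> z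
    using that R by (intro D) auto
  have z0R: "cmod z0 < R" by (simp add: R_def)
  from lat_tail_deriv[OF R KK D' z0R]
  have tl: "((\<lambda>z. infsum (\<lambda>\<omega>. f \<omega> z) (Tl R)) has_field_derivative infsum (\<lambda>\<omega>. f' \<omega> z0) (Tl R)) (at z0)"
    and tls: "(\<lambda>\<omega>. f' \<omega> z0) summable_on Tl R" by auto
  have fin: "((\<lambda>z. \<Sum>\<omega>\<in>Ls - Tl R. f \<omega> z) has_field_derivative (\<Sum>\<omega>\<in>Ls - Tl R. f' \<omega> z0)) (at z0)"
    by (rule DERIV_sum, rule D) (use z0 in auto)
  have "((\<lambda>z. (\<Sum>\<omega>\<in>Ls - Tl R. f \<omega> z) + infsum (\<lambda>\<omega>. f \<omega> z) (Tl R)) has_field_derivative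
          (\<Sum>\<omega>\<in>Ls - Tl R. f' \<omega> z0) + infsum (\<lambda>\<omega>. f' \<omega> z0) (Tl R)) (at z0)"
    by (rule DERIV_add[OF fin tl])
  hence d: "((\<lambda>z. infsum (\<lambda>\<omega>. f \<omega> z) Ls) has_field_derivative
          (\<Sum>\<omega>\<in>Ls - Tl R. f' \<omega> z0) + infsum (\<lambda>\<omega>. f' \<omega> z0) (Tl R)) (at z0)"
  proof (rule has_field_derivative_transform_within_open[where S = "ball 0 R"])
    fix z :: complex assume "z \<in> ball 0 R"
    hence "cmod z \<le> R" by simp
    show "(\<Sum>\<omega>\<in>Ls - Tl R. f \<omega> z) + infsum (\<lambda>\<omega>. f \<omega> z) (Tl R) = infsum (\<lambda>\<omega>. f \<omega> z) Ls"
    proof -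
      have "(\<lambda>\<omega>. f \<omega> z) summable_on Tl R" by (rule lat_tail_summable[where f=f, OF KK \<open>cmod z \<le> R\<close>])
      from lat_split[where f=f and z=z, OF this] show ?thesis by simp
    qed
  qed (use z0R in auto)
  have "(\<lambda>\<omega>. f' \<omega> z0) summable_on Ls"
  proof -
    have "Ls = (Ls - Tl R) \<union> Tl R" using Tl_sub by auto
    moreover have "(\<lambda>\<omega>. f' \<omega> z0) summable_on (Ls - Tl R)" by (rule summable_on_finite[OF finite_Ls_Tl])
    ultimately show ?thesis using summable_on_union[OF _ tls] by metis
  qed
  thus ?thesis using d lat_split[where f=f' and z=z0, OF tls] by simp
qed

end

lemma inv2_deriv: "(u::complex) \<noteq> 0 \<Longrightarrow> ((\<lambda>u. 1 / u ^ 2) has_field_derivative -2 / u ^ 3) (at u)"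
  by (rule derivative_eq_intros refl | simp)+ (simp add: field_simps eval_nat_numeral)
lemma inv1_deriv: "(u::complex) \<noteq> 0 \<Longrightarrow> ((\<lambda>u. 1 / u) has_field_derivative -1 / u ^ 2) (at u)"
  by (rule derivative_eq_intros refl | simp)+ (simp add: field_simps power2_eq_square)
lemma deriv_shift: "(g has_field_derivative D) (at (z - c)) \<Longrightarrow> ((\<lambda>z. g (z - c)) has_field_derivative D) (at z)"
  for z c :: complex
  using DERIV_shift[of g D z "-c"] by simp
lemma aux1: "(d::complex) \<noteq> 0 \<Longrightarrow> \<omega> \<noteq> 0 \<Longrightarrow> 1/d^2 - 1/\<omega>^2 = (\<omega> - d) * (\<omega> + d) / (d^2 * \<omega>^2)"
  by (simp add: field_simps) algebra
lemma aux2: "(d::complex) \<noteq> 0 \<Longrightarrow> \<omega> \<noteq> 0 \<Longrightarrow> 1 / d + 1 / \<omega> + (d + \<omega>) / \<omega> ^ 2 = (d + \<omega>) ^ 2 / (\<omega> ^ 2 * d)"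
  by (simp add: field_simps) algebra
lemma norm_div_le: "cmod a \<le> A \<Longrightarrow> B \<le> cmod b \<Longrightarrow> 0 < B \<Longrightarrow> cmod (a / b) \<le> A / B"
  unfolding norm_divide by (rule frac_le) (auto intro: order_trans[OF norm_ge_zero])

lemma half_le_diff: "cmod (z::complex) \<le> R \<Longrightarrow> 2 * R \<le> cmod \<omega> \<Longrightarrow> cmod \<omega> / 2 \<le> cmod (z - \<omega>)"
proof -
  assume a: "cmod z \<le> R" "2 * R \<le> cmod \<omega>"
  have "cmod \<omega> \<le> cmod (z - \<omega>) + cmod z" using norm_triangle_ineq[of "\<omega> - z" z] by (simp add: norm_minus_commute)
  thus ?thesis using a by linarith
qed

lemma pterm_bound:
  fixes z \<omega> :: complex
  assumes w: "\<omega> \<noteq> 0" and z: "cmod z \<le> R" and R: "2 * R \<le> cmod \<omega>"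
  shows "cmod (1 / (z - \<omega>) ^ 2 - 1 / \<omega> ^ 2) \<le> 10 * R / cmod \<omega> ^ 3"
proof -
  have wp: "cmod \<omega> > 0" using w by simp
  have d: "cmod \<omega> / 2 \<le> cmod (z - \<omega>)" by (rule half_le_diff[OF z R])
  hence zw: "z \<noteq> \<omega>" using wp by auto
  have eq: "1 / (z - \<omega>) ^ 2 - 1 / \<omega> ^ 2 = z * (2 * \<omega> - z) / ((z - \<omega>) ^ 2 * \<omega> ^ 2)"
    using aux1[of "z - \<omega>" \<omega>] zw w by (simp add: algebra_simps)
  have num: "cmod (z * (2 * \<omega> - z)) \<le> R * (5/2 * cmod \<omega>)"
  proof -
    have "cmod (2 * \<omega> - z) \<le> 2 * cmod \<omega> + cmod z" using norm_triangle_ineq4[of "2*\<omega>" z] by simp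
    also have "\<dots> \<le> 5/2 * cmod \<omega>" using z R by linarith
    finally have "cmod (2 * \<omega> - z) \<le> 5/2 * cmod \<omega>" .
    moreover have "0 \<le> R" using z norm_ge_zero order_trans by blast
    ultimately show ?thesis unfolding norm_mult using z by (intro mult_mono) auto
  qed
  have den: "(cmod \<omega> / 2) ^ 2 * cmod \<omega> ^ 2 \<le> cmod ((z - \<omega>) ^ 2 * \<omega> ^ 2)"
    unfolding norm_mult norm_power by (intro mult_right_mono power_mono d) auto
  have "cmod (1 / (z - \<omega>) ^ 2 - 1 / \<omega> ^ 2) \<le> R * (5/2 * cmod \<omega>) / ((cmod \<omega> / 2) ^ 2 * cmod \<omega> ^ 2)"
    unfolding eq by (rule norm_div_le[OF num den]) (use wp in simp)
  also have "\<dots> = 10 * R / cmod \<omega> ^ 3" using wp by (simp add: field_simps eval_nat_numeral)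
  finally show ?thesis .
qed

lemma zterm_eq: "\<omega> \<noteq> 0 \<Longrightarrow> z \<noteq> \<omega> \<Longrightarrow> 1 / (z - \<omega>) + 1 / \<omega> + z / \<omega> ^ 2 = z ^ 2 / (\<omega> ^ 2 * (z - \<omega>))"
  for z \<omega> :: complex
  using aux2[of "z - \<omega>" \<omega>] by simp

lemma zterm_bound:
  fixes z \<omega> :: complex
  assumes w: "\<omega> \<noteq> 0" and z: "cmod z \<le> R" and R: "2 * R \<le> cmod \<omega>"
  shows "cmod (1 / (z - \<omega>) + 1 / \<omega> + z / \<omega> ^ 2) \<le> 2 * R ^ 2 / cmod \<omega> ^ 3"
proof -
  have wp: "cmod \<omega> > 0" using w by simp
  have d: "cmod \<omega> / 2 \<le> cmod (z - \<omega>)" by (rule half_le_diff[OF z R])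
  hence zw: "z \<noteq> \<omega>" using wp by auto
  have num: "cmod (z ^ 2) \<le> R ^ 2" unfolding norm_power by (rule power_mono[OF z]) auto
  have den: "cmod \<omega> ^ 2 * (cmod \<omega> / 2) \<le> cmod (\<omega> ^ 2 * (z - \<omega>))"
    unfolding norm_mult norm_power by (intro mult_left_mono d) auto
  have "cmod (1 / (z - \<omega>) + 1 / \<omega> + z / \<omega> ^ 2) \<le> R ^ 2 / (cmod \<omega> ^ 2 * (cmod \<omega> / 2))"
    unfolding zterm_eq[OF w zw] by (rule norm_div_le[OF num den]) (use wp in simp)
  also have "\<dots> = 2 * R ^ 2 / cmod \<omega> ^ 3" using wp by (simp add: field_simps eval_nat_numeral)
  finally show ?thesis .
qed

context wlat begin

abbreviation "wpf \<equiv> wp w1 w2"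

definition P0 :: "complex \<Rightarrow> complex" where
  "P0 z = infsum (\<lambda>\<omega>. 1 / (z - \<omega>) ^ 2 - 1 / \<omega> ^ 2) Ls"

lemma wp_P0: "wpf z = 1 / z ^ 2 + P0 z"
  by (simp add: wp_def P0_def)

lemma pterm_K: "R > 0 \<Longrightarrow> \<exists>K. \<forall>\<omega> z. \<omega> \<in> Ls \<longrightarrow> cmod z \<le> R \<longrightarrow> 2 * R \<le> cmod \<omega> \<longrightarrow>
    cmod (1 / (z - \<omega>) ^ 2 - 1 / \<omega> ^ 2) \<le> K / cmod \<omega> ^ 3"
  by (rule exI[of _ "10 * R"]) (auto intro: pterm_bound)

lemma pterm_deriv: "\<omega> \<in> Ls \<Longrightarrow> z \<noteq> \<omega> \<Longrightarrow>
   ((\<lambda>z. 1 / (z - \<omega>) ^ 2 - 1 / \<omega> ^ 2) has_field_derivative (-2 / (z - \<omega>) ^ 3)) (at z)"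
  using DERIV_diff[OF deriv_shift[OF inv2_deriv[of "z - \<omega>"]] DERIV_const[of "1 / \<omega> ^ 2" "at z"]] by simp

lemma P0_deriv: "z \<notin> Ls \<Longrightarrow> (P0 has_field_derivative infsum (\<lambda>\<omega>. -2 / (z - \<omega>) ^ 3) Ls) (at z)
   \<and> (\<lambda>\<omega>. -2 / (z - \<omega>) ^ 3) summable_on Ls"
  unfolding P0_def[abs_def] by (rule lat_deriv[OF pterm_K pterm_deriv])

lemma P0_holo: "P0 holomorphic_on - Ls"
  using P0_deriv open_nLs by (auto simp: holomorphic_on_open field_differentiable_def)

definition wpd :: "complex \<Rightarrow> complex" where
  "wpd z = -2 * infsum (\<lambda>\<omega>. 1 / (z - \<omega>) ^ 3) Lt"

lemma Lt_insert: "insert 0 Ls = Lt" by auto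

lemma wp_deriv: "z \<notin> Lt \<Longrightarrow> (wpf has_field_derivative wpd z) (at z)"
proof -
  assume z: "z \<notin> Lt"
  hence z0: "z \<noteq> 0" "z \<notin> Ls" by auto
  from P0_deriv[OF z0(2)] have d: "(P0 has_field_derivative infsum (\<lambda>\<omega>. -2 / (z - \<omega>) ^ 3) Ls) (at z)"
    and s: "(\<lambda>\<omega>. -2 / (z - \<omega>) ^ 3) summable_on Ls" by auto
  have s': "(\<lambda>\<omega>. 1 / (z - \<omega>) ^ 3) summable_on Ls"
    using summable_on_cmult_right[OF s, of "-1/2"] by simp
  have "((\<lambda>z. 1 / z ^ 2 + P0 z) has_field_derivative (-2 / z ^ 3 + infsum (\<lambda>\<omega>. -2 / (z - \<omega>) ^ 3) Ls)) (at z)"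
    using DERIV_add[OF inv2_deriv[OF z0(1)] d] .
  moreover have "-2 / z ^ 3 + infsum (\<lambda>\<omega>. -2 / (z - \<omega>) ^ 3) Ls = wpd z"
  proof -
    have "infsum (\<lambda>\<omega>. -2 / (z - \<omega>) ^ 3) Ls = -2 * infsum (\<lambda>\<omega>. 1 / (z - \<omega>) ^ 3) Ls"
      using infsum_cmult_right[OF s', of "-2"] by simp
    moreover have "infsum (\<lambda>\<omega>. 1 / (z - \<omega>) ^ 3) Lt = 1 / z ^ 3 + infsum (\<lambda>\<omega>. 1 / (z - \<omega>) ^ 3) Ls"
      using infsum_insert[OF s', of 0] Lt_insert by simp
    ultimately show ?thesis by (simp add: wpd_def algebra_simps)
  qed
  ultimately show ?thesis by (simp add: wp_P0[abs_def])
qed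

lemma wp_holo: "wpf holomorphic_on - Lt"
  using wp_deriv open_nlat by (auto simp: holomorphic_on_open field_differentiable_def)

lemma deriv_wp: "z \<notin> Lt \<Longrightarrow> deriv wpf z = wpd z"
  using wp_deriv by (rule DERIV_imp_deriv)

lemma bij_shift: "c \<in> Lt \<Longrightarrow> bij_betw (\<lambda>\<omega>. \<omega> + c) Lt Lt"
  by (rule bij_betwI[of _ _ _ "\<lambda>\<omega>. \<omega> - c"]) (auto intro: lat_add lat_diff)

lemma bij_neg: "bij_betw uminus Ls Ls"
  by (rule bij_betwI[of _ _ _ uminus]) auto

lemma wpd_periodic: "c \<in> Lt \<Longrightarrow> wpd (z + c) = wpd z"
proof -
  assume c: "c \<in> Lt"
  have "infsum (\<lambda>\<omega>. 1 / (z + c - \<omega>) ^ 3) Lt = infsum (\<lambda>\<omega>. 1 / (z + c - (\<omega> + c)) ^ 3) Lt"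
    using infsum_reindex_bij_betw[OF bij_shift[OF c], of "\<lambda>\<omega>. 1 / (z + c - \<omega>) ^ 3"] by simp
  thus ?thesis by (simp add: wpd_def)
qed

lemma P0_even: "P0 (- z) = P0 z"
proof -
  have "P0 z = infsum (\<lambda>\<omega>. 1 / (z - - \<omega>) ^ 2 - 1 / (- \<omega>) ^ 2) Ls"
    unfolding P0_def using infsum_reindex_bij_betw[OF bij_neg, of "\<lambda>\<omega>. 1 / (z - \<omega>) ^ 2 - 1 / \<omega> ^ 2"] by simp
  also have "\<dots> = P0 (- z)" unfolding P0_def by (rule infsum_cong) (simp add: power2_eq_square algebra_simps)
  finally show ?thesis by simp
qed

lemma wp_even: "wpf (- z) = wpf z"
  by (simp add: wp_P0 P0_even)

lemma half_not_lat: "w \<in> {w1, w2} \<Longrightarrow> w / 2 \<notin> Lt"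
proof
  assume w: "w \<in> {w1, w2}" and h: "w / 2 \<in> Lt"
  then obtain m n where mn: "w / 2 = lp m n" by (auto simp: lattice_iff)
  hence "w = 2 * lp m n" by simp
  hence "w = lp (2 * m) (2 * n)" by (simp add: lp_def algebra_simps)
  moreover have "w = lp 1 0 \<or> w = lp 0 1" using w by (auto simp: lp_def)
  ultimately have "(2*m = 1 \<and> 2*n = 0) \<or> (2*m = 0 \<and> 2*n = 1)" using lp_inj by metis
  thus False by presburger
qed

lemma wp_periodic_basic:
  assumes w: "w \<in> {w1, w2}" and z: "z \<notin> Lt"
  shows "wpf (z + w) = wpf z"
proof -
  have wL: "w \<in> Lt" using w by auto
  define h where "h = (\<lambda>z. wpf (z + w) - wpf z)"
  have hd: "(h has_field_derivative 0) (at y)" if "y \<in> - Lt" for y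
  proof -
    have y: "y \<notin> Lt" "y + w \<notin> Lt" using that lat_add_iff1[OF wL] by auto
    have "((\<lambda>z. wpf (z + w)) has_field_derivative wpd (y + w) * 1) (at y)"
      using DERIV_shift[of wpf "wpd (y + w)" y w] wp_deriv[OF y(2)] by simp
    hence "(h has_field_derivative wpd (y + w) - wpd y) (at y)"
      unfolding h_def using wp_deriv[OF y(1)] by (auto intro: DERIV_diff)
    thus ?thesis using wpd_periodic[OF wL] by simp
  qed
  have cont: "continuous_on (- Lt) h"
    by (rule DERIV_continuous_on[where D="\<lambda>_. 0"]) (use hd has_field_derivative_at_within in blast)
  obtain c where c: "\<And>y. y \<in> - Lt \<Longrightarrow> h y = c"
    by (rule DERIV_zero_connected_constant[OF connected_nlat open_nlat finite.emptyI cont]) (use hd in auto)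
  have m: "- (w / 2) \<notin> Lt" using half_not_lat[OF w] by simp
  have "h (- (w / 2)) = wpf (w / 2) - wpf (- (w / 2))" by (simp add: h_def)
  also have "\<dots> = 0" by (simp add: wp_even)
  moreover have "- (w / 2) \<in> - Lt" using m by simp
  ultimately have "c = 0" using c by metis
  thus ?thesis using c[of z] z unfolding h_def by simp
qed

end

context wlat begin

lemma lat_int_mult: "w \<in> {w1, w2} \<Longrightarrow> of_int i * w \<in> Lt"
proof -
  assume w: "w \<in> {w1, w2}"
  have "of_int i * w1 = lp i 0" "of_int i * w2 = lp 0 i" by (simp_all add: lp_def)
  thus ?thesis using w lat_lp by auto
qed

lemma wp_periodic_int:
  assumes w: "w \<in> {w1, w2}"
  shows "\<forall>z. z \<notin> Lt \<longrightarrow> wpf (z + of_int k * w) = wpf z"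
proof (induct k rule: int_induct[where k = 0])
  case base then show ?case by simp
next
  case (step1 i)
  show ?case
  proof (intro allI impI)
    fix z assume z: "z \<notin> Lt"
    have iw: "of_int i * w \<in> Lt" using w by (rule lat_int_mult)
    have "z + of_int i * w \<notin> Lt" using z lat_add_iff1[OF iw] by simp
    hence "wpf (z + of_int i * w + w) = wpf (z + of_int i * w)" by (rule wp_periodic_basic[OF w])
    also have "\<dots> = wpf z" using step1 z by simp
    finally show "wpf (z + of_int (i + 1) * w) = wpf z" by (simp add: algebra_simps)
  qed
next
  case (step2 i)
  show ?case
  proof (intro allI impI)
    fix z assume z: "z \<notin> Lt"
    have iw: "of_int (i - 1) * w \<in> Lt" using w by (rule lat_int_mult)
    have y: "z + of_int (i - 1) * w \<notin> Lt" using z lat_add_iff1[OF iw] by simp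
    have "wpf (z + of_int (i - 1) * w) = wpf (z + of_int (i - 1) * w + w)" by (rule wp_periodic_basic[OF w y, symmetric])
    also have "z + of_int (i - 1) * w + w = z + of_int i * w" by (simp add: algebra_simps)
    also have "wpf \<dots> = wpf z" using step2 z by simp
    finally show "wpf (z + of_int (i - 1) * w) = wpf z" .
  qed
qed

lemma wp_periodic: assumes c: "c \<in> Lt" and z: "z \<notin> Lt" shows "wpf (z + c) = wpf z"
proof -
  obtain m n where c: "c = of_int m * w1 + of_int n * w2" using c by (auto simp: lattice_iff lp_def)
  have mw: "of_int m * w1 \<in> Lt" by (rule lat_int_mult) simp
  have z1: "z + of_int m * w1 \<notin> Lt" using z lat_add_iff1[OF mw] by simp
  have "wpf (z + c) = wpf ((z + of_int m * w1) + of_int n * w2)" by (simp add: c add.assoc)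
  also have "\<dots> = wpf (z + of_int m * w1)" using wp_periodic_int[of w2 n] z1 by simp
  also have "\<dots> = wpf z" using wp_periodic_int[of w1 m] z by simp
  finally show ?thesis .
qed

definition Zf :: "complex \<Rightarrow> complex" where
  "Zf z = 1 / z + infsum (\<lambda>\<omega>. 1 / (z - \<omega>) + 1 / \<omega> + z / \<omega> ^ 2) Ls"

lemma zterm_K: "R > 0 \<Longrightarrow> \<exists>K. \<forall>\<omega> z. \<omega> \<in> Ls \<longrightarrow> cmod z \<le> R \<longrightarrow> 2 * R \<le> cmod \<omega> \<longrightarrow>
    cmod (1 / (z - \<omega>) + 1 / \<omega> + z / \<omega> ^ 2) \<le> K / cmod \<omega> ^ 3"
  by (rule exI[of _ "2 * R ^ 2"]) (auto intro: zterm_bound)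

lemma zterm_deriv: fixes z \<omega> :: complex shows "\<omega> \<noteq> 0 \<Longrightarrow> z \<noteq> \<omega> \<Longrightarrow>
   ((\<lambda>z. 1 / (z - \<omega>) + 1 / \<omega> + z / \<omega> ^ 2) has_field_derivative - (1 / (z - \<omega>) ^ 2 - 1 / \<omega> ^ 2)) (at z)"
proof -
  assume "\<omega> \<noteq> 0" "z \<noteq> \<omega>"
  have d1: "((\<lambda>z. 1 / (z - \<omega>)) has_field_derivative -1 / (z - \<omega>) ^ 2) (at z)"
    using deriv_shift[OF inv1_deriv[of "z - \<omega>"]] \<open>z \<noteq> \<omega>\<close> by simp
  have d3: "((\<lambda>z. z / \<omega> ^ 2) has_field_derivative 1 / \<omega> ^ 2) (at z)"
    using DERIV_cdivide[OF DERIV_ident, of "\<omega> ^ 2" z] by simp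
  have "((\<lambda>z. 1 / (z - \<omega>) + 1 / \<omega> + z / \<omega> ^ 2) has_field_derivative (-1 / (z - \<omega>) ^ 2 + 0 + 1 / \<omega> ^ 2)) (at z)"
    by (intro DERIV_add d1 d3 DERIV_const)
  thus ?thesis by simp
qed

lemma Z_deriv: "z \<notin> Lt \<Longrightarrow> (Zf has_field_derivative - wpf z) (at z)"
proof -
  assume z: "z \<notin> Lt"
  hence z0: "z \<noteq> 0" "z \<notin> Ls" by auto
  have d: "((\<lambda>z. infsum (\<lambda>\<omega>. 1 / (z - \<omega>) + 1 / \<omega> + z / \<omega> ^ 2) Ls) has_field_derivative
      infsum (\<lambda>\<omega>. - (1 / (z - \<omega>) ^ 2 - 1 / \<omega> ^ 2)) Ls) (at z)"
    using lat_deriv[OF zterm_K zterm_deriv z0(2)] by auto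
  have "infsum (\<lambda>\<omega>. - (1 / (z - \<omega>) ^ 2 - 1 / \<omega> ^ 2)) Ls = - P0 z"
    unfolding P0_def by (rule infsum_uminus)
  hence "(Zf has_field_derivative (-1 / z ^ 2 + - P0 z)) (at z)"
    using DERIV_add[OF inv1_deriv[OF z0(1)] d] by (simp add: Zf_def[abs_def])
  thus ?thesis by (simp add: wp_P0)
qed

lemma Z_holo: "Zf holomorphic_on - Lt"
  using Z_deriv open_nlat by (auto simp: holomorphic_on_open field_differentiable_def)

lemma Z_odd: "Zf (- z) = - Zf z"
proof -
  have "infsum (\<lambda>\<omega>. 1 / (z - \<omega>) + 1 / \<omega> + z / \<omega> ^ 2) Ls
      = infsum (\<lambda>\<omega>. 1 / (z - - \<omega>) + 1 / (- \<omega>) + z / (- \<omega>) ^ 2) Ls"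
    using infsum_reindex_bij_betw[OF bij_neg, of "\<lambda>\<omega>. 1 / (z - \<omega>) + 1 / \<omega> + z / \<omega> ^ 2"] by simp
  also have "\<dots> = infsum (\<lambda>\<omega>. - (1 / (- z - \<omega>) + 1 / \<omega> + - z / \<omega> ^ 2)) Ls"
  proof (rule infsum_cong)
    fix \<omega> :: complex
    have a: "1 / (- z - \<omega>) = - (1 / (z + \<omega>))" by (metis minus_add_distrib minus_divide_right add_uminus_conv_diff)
    show "1 / (z - - \<omega>) + 1 / (- \<omega>) + z / (- \<omega>) ^ 2 = - (1 / (- z - \<omega>) + 1 / \<omega> + - z / \<omega> ^ 2)"
      unfolding a by simp
  qed
  also have "\<dots> = - infsum (\<lambda>\<omega>. 1 / (- z - \<omega>) + 1 / \<omega> + - z / \<omega> ^ 2) Ls"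
    by (rule infsum_uminus)
  finally show ?thesis by (simp add: Zf_def)
qed

lemma Z_quasi: assumes c: "c \<in> Lt" obtains \<eta> where "\<And>z. z \<notin> Lt \<Longrightarrow> Zf (z + c) = Zf z + \<eta>"
proof -
  define h where "h = (\<lambda>z. Zf (z + c) - Zf z)"
  have hd: "(h has_field_derivative 0) (at y)" if "y \<in> - Lt" for y
  proof -
    have y: "y \<notin> Lt" "y + c \<notin> Lt" using that lat_add_iff1[OF c] by auto
    have "((\<lambda>z. Zf (z + c)) has_field_derivative - wpf (y + c)) (at y)"
      using DERIV_shift[of Zf "- wpf (y + c)" y c] Z_deriv[OF y(2)] by simp
    hence "(h has_field_derivative - wpf (y + c) - - wpf y) (at y)"
      unfolding h_def by (rule DERIV_diff[OF _ Z_deriv[OF y(1)]])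
    thus ?thesis using wp_periodic[OF c y(1)] by simp
  qed
  have cont: "continuous_on (- Lt) h"
    by (rule DERIV_continuous_on[where D="\<lambda>_. 0"]) (use hd has_field_derivative_at_within in blast)
  obtain \<eta> where e: "\<And>y. y \<in> - Lt \<Longrightarrow> h y = \<eta>"
    by (rule DERIV_zero_connected_constant[OF connected_nlat open_nlat finite.emptyI cont]) (use hd in auto)
  show ?thesis by (rule that[of \<eta>]) (use e in \<open>force simp: h_def algebra_simps\<close>)
qed

end

definition fac :: "complex \<Rightarrow> complex \<Rightarrow> complex" where
  "fac \<omega> z = (1 - z / \<omega>) * exp (z / \<omega> + z ^ 2 / (2 * \<omega> ^ 2))"

definition lterm :: "complex \<Rightarrow> complex \<Rightarrow> complex" where
  "lterm \<omega> z = Ln (1 - z / \<omega>) + z / \<omega> + z ^ 2 / (2 * \<omega> ^ 2)"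

definition zt :: "complex \<Rightarrow> complex \<Rightarrow> complex" where
  "zt \<omega> z = 1 / (z - \<omega>) + 1 / \<omega> + z / \<omega> ^ 2"

lemma u_deriv: "\<omega> \<noteq> 0 \<Longrightarrow> ((\<lambda>z. z / \<omega> + z ^ 2 / (2 * \<omega> ^ 2)) has_field_derivative (1 / \<omega> + z / \<omega> ^ 2)) (at z)"
proof -
  assume w: "\<omega> \<noteq> 0"
  have "((\<lambda>z. z / \<omega> + z ^ 2 / (2 * \<omega> ^ 2)) has_field_derivative (1 / \<omega> + (of_nat 2 * (1 * z ^ (2 - Suc 0))) / (2 * \<omega> ^ 2))) (at z)"
    by (intro DERIV_add DERIV_cdivide DERIV_ident DERIV_power)
  thus ?thesis by simp
qed

lemma w_deriv: "((\<lambda>z. 1 - z / \<omega>) has_field_derivative - (1 / \<omega>)) (at z)"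
proof -
  have "((\<lambda>z. 1 - z / \<omega>) has_field_derivative 0 - 1 / \<omega>) (at z)"
    by (intro DERIV_diff DERIV_cdivide DERIV_ident DERIV_const)
  thus ?thesis by simp
qed

lemma fac_deriv_gen: "\<omega> \<noteq> 0 \<Longrightarrow> (fac \<omega> has_field_derivative
   (- (1 / \<omega>)) * exp (z / \<omega> + z ^ 2 / (2 * \<omega> ^ 2)) +
   (exp (z / \<omega> + z ^ 2 / (2 * \<omega> ^ 2)) * (1 / \<omega> + z / \<omega> ^ 2)) * (1 - z / \<omega>)) (at z)"
  unfolding fac_def[abs_def]
  by (rule DERIV_mult[OF w_deriv DERIV_chain2[OF DERIV_exp u_deriv]])

lemma key1: "\<omega> \<noteq> 0 \<Longrightarrow> z \<noteq> \<omega> \<Longrightarrow> (1 - z / \<omega>) * (1 / (z - \<omega>)) = - (1 / \<omega>)"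
  for z \<omega> :: complex
proof -
  assume a: "\<omega> \<noteq> 0" "z \<noteq> \<omega>"
  hence b: "z - \<omega> \<noteq> 0" by simp
  have "1 - z / \<omega> = - (1 / \<omega>) * (z - \<omega>)"
    using a by (simp add: field_simps)
  hence "(1 - z / \<omega>) * (1 / (z - \<omega>)) = - (1 / \<omega>) * ((z - \<omega>) * (1 / (z - \<omega>)))" by (simp only: mult.assoc)
  thus ?thesis using b by simp
qed
lemma fac_deriv: "\<omega> \<noteq> 0 \<Longrightarrow> z \<noteq> \<omega> \<Longrightarrow> (fac \<omega> has_field_derivative fac \<omega> z * zt \<omega> z) (at z)"
proof -
  assume w: "\<omega> \<noteq> 0" and zw: "z \<noteq> \<omega>"
  define E where "E = exp (z / \<omega> + z ^ 2 / (2 * \<omega> ^ 2))"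
  have gen: "\<And>X E a b. (X::complex) * E * (a + b) = E * (X * a) + E * b * X" by (simp add: algebra_simps)
  have "fac \<omega> z * zt \<omega> z = (1 - z / \<omega>) * E * (1 / (z - \<omega>) + (1 / \<omega> + z / \<omega> ^ 2))"
    by (simp add: fac_def zt_def E_def add.assoc)
  also have "\<dots> = E * ((1 - z / \<omega>) * (1 / (z - \<omega>))) + E * (1 / \<omega> + z / \<omega> ^ 2) * (1 - z / \<omega>)"
    by (rule gen)
  also have "\<dots> = (- (1 / \<omega>)) * E + E * (1 / \<omega> + z / \<omega> ^ 2) * (1 - z / \<omega>)"
    using key1[OF w zw] by simp
  finally show ?thesis using fac_deriv_gen[OF w, of z] by (simp add: E_def)
qed

lemma Re_pos_nonpos: "Re w > 0 \<Longrightarrow> w \<notin> \<real>\<^sub>\<le>\<^sub>0"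
  by (auto simp: complex_nonpos_Reals_iff)

lemma small_Re: assumes "cmod z < cmod \<omega>" shows "Re (1 - z / \<omega>) > 0"
proof -
  have "\<omega> \<noteq> 0" using assms by auto
  hence "cmod (z / \<omega>) < 1" using assms by (simp add: norm_divide divide_less_eq)
  moreover have "Re (z / \<omega>) \<le> cmod (z / \<omega>)" by (rule complex_Re_le_cmod)
  ultimately show ?thesis by simp
qed

lemma key2: "\<omega> \<noteq> 0 \<Longrightarrow> z \<noteq> \<omega> \<Longrightarrow> inverse (1 - z / \<omega>) * (- (1 / \<omega>)) = 1 / (z - \<omega>)"
  for z \<omega> :: complex
proof -
  assume a: "\<omega> \<noteq> 0" "z \<noteq> \<omega>"
  hence b: "z - \<omega> \<noteq> 0" "1 - z / \<omega> \<noteq> 0" by (auto simp: field_simps)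
  have "(1 - z / \<omega>) * (- (1 / \<omega>)) * (1 / (z - \<omega>)) = 1 / (z - \<omega>) * (- (1 / \<omega>)) * (1 - z/\<omega>) " by simp
  have "- (1 / \<omega>) = (1 - z / \<omega>) * (1 / (z - \<omega>))" using key1[OF a] by simp
  hence "inverse (1 - z / \<omega>) * (- (1 / \<omega>)) = inverse (1 - z / \<omega>) * (1 - z / \<omega>) * (1 / (z - \<omega>))" by (simp add: mult.assoc)
  thus ?thesis using b by simp
qed
lemma lterm_deriv: assumes "cmod z < cmod \<omega>" shows "(lterm \<omega> has_field_derivative zt \<omega> z) (at z)"
proof -
  have w: "\<omega> \<noteq> 0" using assms by auto
  have zw: "z \<noteq> \<omega>" using assms by auto
  have dl: "((\<lambda>z. Ln (1 - z / \<omega>)) has_field_derivative inverse (1 - z / \<omega>) * (- (1 / \<omega>))) (at z)"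
    by (rule DERIV_chain2[where f = Ln, OF has_field_derivative_Ln w_deriv])
       (rule Re_pos_nonpos[OF small_Re[OF assms]])
  have "(lterm \<omega> has_field_derivative inverse (1 - z / \<omega>) * (- (1 / \<omega>)) + (1 / \<omega> + z / \<omega> ^ 2)) (at z)"
    unfolding lterm_def[abs_def] using DERIV_add[OF dl u_deriv[OF w]] by (simp only: add.assoc)
  moreover have "inverse (1 - z / \<omega>) * (- (1 / \<omega>)) + (1 / \<omega> + z / \<omega> ^ 2) = zt \<omega> z"
    by (simp only: key2[OF w zw] zt_def add.assoc)
  ultimately show ?thesis by simp
qed

lemma lterm_exp: assumes "cmod z < cmod \<omega>" shows "exp (lterm \<omega> z) = fac \<omega> z"
proof -
  have "1 - z / \<omega> \<noteq> 0" using small_Re[OF assms] by auto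
  thus ?thesis by (simp add: lterm_def fac_def exp_add add.assoc)
qed

lemma lterm_0: "lterm \<omega> 0 = 0" by (simp add: lterm_def)

lemma lterm_bound:
  assumes w: "\<omega> \<noteq> 0" and z: "cmod z \<le> R" and R: "2 * R \<le> cmod \<omega>"
  shows "cmod (lterm \<omega> z) \<le> 2 * R ^ 3 / cmod \<omega> ^ 3"
proof -
  have wp: "cmod \<omega> > 0" using w by simp
  have R0: "0 \<le> R" using z norm_ge_zero order_trans by blast
  have lt: "cmod u < cmod \<omega>" if "u \<in> cball 0 R" for u
  proof -
    from that have "cmod u \<le> R" by simp
    thus ?thesis using R wp by linarith
  qed
  have "cmod (lterm \<omega> z - lterm \<omega> 0) \<le> (2 * R ^ 2 / cmod \<omega> ^ 3) * cmod (z - 0)"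
  proof (rule field_differentiable_bound[where S = "cball 0 R" and f' = "zt \<omega>"])
    show "convex (cball (0::complex) R)" by simp
    show "(lterm \<omega> has_field_derivative zt \<omega> u) (at u within cball 0 R)" if "u \<in> cball 0 R" for u
      using lterm_deriv[OF lt[OF that]] by (rule has_field_derivative_at_within)
    show "cmod (zt \<omega> u) \<le> 2 * R ^ 2 / cmod \<omega> ^ 3" if "u \<in> cball 0 R" for u
      unfolding zt_def by (rule zterm_bound[OF w _ R]) (use that in simp)
  qed (use z R0 in auto)
  also have "\<dots> \<le> (2 * R ^ 2 / cmod \<omega> ^ 3) * R" using z by (intro mult_left_mono) auto
  finally show ?thesis by (simp add: lterm_0 power3_eq_cube power2_eq_square)
qed

lemma fac_0: "fac \<omega> 0 = 1" by (simp add: fac_def)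

lemma fac_zero_iff: "\<omega> \<noteq> 0 \<Longrightarrow> fac \<omega> z = 0 \<longleftrightarrow> z = \<omega>"
  by (auto simp: fac_def field_simps)

lemma fac_neg: "fac \<omega> (- z) = fac (- \<omega>) z"
  by (simp add: fac_def power2_eq_square)

lemma lterm_neg: "lterm \<omega> (- z) = lterm (- \<omega>) z"
  by (simp add: lterm_def power2_eq_square)


context wlat begin

abbreviation "sig \<equiv> wsigma w1 w2"

definition Tsum :: "real \<Rightarrow> complex \<Rightarrow> complex" where
  "Tsum R z = infsum (\<lambda>\<omega>. lterm \<omega> z) (Tl R)"

definition Qf :: "real \<Rightarrow> complex \<Rightarrow> complex" where
  "Qf R z = (\<Prod>\<omega>\<in>Ls - Tl R. fac \<omega> z) * exp (Tsum R z)"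

lemma lterm_KR: "\<And>\<omega> z. \<omega> \<in> Ls \<Longrightarrow> cmod z \<le> R \<Longrightarrow> 2 * R \<le> cmod \<omega> \<Longrightarrow> cmod (lterm \<omega> z) \<le> (2 * R ^ 3) / cmod \<omega> ^ 3"
  by (rule lterm_bound) auto

lemma Tl_lt: "\<omega> \<in> Tl R \<Longrightarrow> cmod z \<le> R \<Longrightarrow> R > 0 \<Longrightarrow> cmod z < cmod \<omega>"
  by (auto simp: Tl_def)

lemma sigma_rep: assumes R: "R > 0" and z: "cmod z \<le> R" shows "sig z = z * Qf R z"
proof -
  define A where "A = Ls - Tl R"
  define g where "g = (\<lambda>\<omega>. if \<omega> \<in> Tl R then lterm \<omega> z else 0)"
  have sT: "(\<lambda>\<omega>. lterm \<omega> z) summable_on Tl R" by (rule lat_tail_summable[OF lterm_KR z])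
  hence hs: "((\<lambda>\<omega>. lterm \<omega> z) has_sum Tsum R z) (Tl R)" by (simp add: Tsum_def has_sum_infsum)
  have hg: "(g has_sum Tsum R z) Ls"
    using has_sum_cong_neutral[of Ls "Tl R" g "\<lambda>\<omega>. lterm \<omega> z"] hs Tl_sub by (auto simp: g_def)
  hence "(sum g \<longlongrightarrow> Tsum R z) (finite_subsets_at_top Ls)" by (simp add: has_sum_def)
  hence lim: "((\<lambda>S. (\<Prod>\<omega>\<in>A. fac \<omega> z) * exp (sum g S)) \<longlongrightarrow> Qf R z) (finite_subsets_at_top Ls)"
    unfolding Qf_def A_def by (intro tendsto_intros)
  have ev: "\<forall>\<^sub>F S in finite_subsets_at_top Ls. (\<Prod>\<omega>\<in>A. fac \<omega> z) * exp (sum g S) = (\<Prod>\<omega>\<in>S. fac \<omega> z)"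
    unfolding eventually_finite_subsets_at_top
  proof (intro exI conjI allI impI)
    show "finite A" unfolding A_def by (rule finite_Ls_Tl)
    show "A \<subseteq> Ls" by (auto simp: A_def)
    fix Y assume Y: "finite Y \<and> A \<subseteq> Y \<and> Y \<subseteq> Ls"
    have YA: "Y - A \<subseteq> Tl R" using Y by (auto simp: A_def)
    have "(\<Prod>\<omega>\<in>Y. fac \<omega> z) = (\<Prod>\<omega>\<in>Y - A. fac \<omega> z) * (\<Prod>\<omega>\<in>A. fac \<omega> z)"
      using Y by (intro prod.subset_diff) auto
    also have "(\<Prod>\<omega>\<in>Y - A. fac \<omega> z) = (\<Prod>\<omega>\<in>Y - A. exp (lterm \<omega> z))"
      by (rule prod.cong[OF refl], rule lterm_exp[symmetric], rule Tl_lt[OF _ z R]) (use YA in auto)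
    also have "\<dots> = exp (\<Sum>\<omega>\<in>Y - A. lterm \<omega> z)" using Y by (simp add: exp_sum)
    also have "(\<Sum>\<omega>\<in>Y - A. lterm \<omega> z) = sum g Y"
    proof -
      have "sum g Y = sum g (Y - A) + sum g A" using Y by (intro sum.subset_diff) auto
      also have "sum g A = 0" by (rule sum.neutral) (auto simp: g_def A_def)
      also have "sum g (Y - A) = (\<Sum>\<omega>\<in>Y - A. lterm \<omega> z)" by (rule sum.cong) (use YA in \<open>auto simp: g_def\<close>)
      finally show ?thesis by simp
    qed
    finally show "(\<Prod>\<omega>\<in>A. fac \<omega> z) * exp (sum g Y) = (\<Prod>\<omega>\<in>Y. fac \<omega> z)" by (simp add: mult.commute)
  qed
  have "((\<lambda>S. \<Prod>\<omega>\<in>S. fac \<omega> z) \<longlongrightarrow> Qf R z) (finite_subsets_at_top Ls)"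
    by (rule Lim_transform_eventually[OF lim ev])
  hence "Lim (finite_subsets_at_top Ls) (\<lambda>S. \<Prod>\<omega>\<in>S. fac \<omega> z) = Qf R z"
    by (intro tendsto_Lim) simp_all
  thus ?thesis by (simp add: wsigma_def fac_def)
qed

lemma Tsum_deriv: assumes R: "R > 0" and z: "cmod z < R"
  shows "(Tsum R has_field_derivative infsum (\<lambda>\<omega>. zt \<omega> z) (Tl R)) (at z) \<and> (\<lambda>\<omega>. zt \<omega> z) summable_on Tl R"
proof -
  have D: "(lterm \<omega> has_field_derivative zt \<omega> u) (at u)" if "\<omega> \<in> Ls" "cmod u \<le> R" "2 * R \<le> cmod \<omega>" for \<omega> u
    by (rule lterm_deriv) (use that R in linarith)
  note X = lat_tail_deriv[where f=lterm and f'=zt and K="2 * R ^ 3", OF R lterm_KR D z]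
  show ?thesis unfolding Tsum_def[abs_def] using X by blast
qed

lemma fac_deriv_ex: "\<omega> \<noteq> 0 \<Longrightarrow> \<exists>D. (fac \<omega> has_field_derivative D) (at z)"
  using fac_deriv_gen by blast

lemma Qf_deriv_ex: assumes R: "R > 0" and z: "cmod z < R" shows "\<exists>D. (Qf R has_field_derivative D) (at z)"
proof -
  have "\<forall>\<omega>\<in>Ls - Tl R. \<exists>D. (fac \<omega> has_field_derivative D) (at z)" using fac_deriv_ex by auto
  then obtain D where D: "\<And>\<omega>. \<omega> \<in> Ls - Tl R \<Longrightarrow> (fac \<omega> has_field_derivative D \<omega>) (at z)" by metis
  have P: "((\<lambda>u. \<Prod>\<omega>\<in>Ls - Tl R. fac \<omega> u) has_field_derivative
      (\<Sum>\<omega>\<in>Ls - Tl R. D \<omega> * (\<Prod>y\<in>(Ls - Tl R) - {\<omega>}. fac y z))) (at z)"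
    by (rule has_field_derivative_prod) (rule D)
  have E: "((\<lambda>u. exp (Tsum R u)) has_field_derivative exp (Tsum R z) * infsum (\<lambda>\<omega>. zt \<omega> z) (Tl R)) (at z)"
    by (rule DERIV_chain2[OF DERIV_exp conjunct1[OF Tsum_deriv[OF R z]]])
  show ?thesis unfolding Qf_def[abs_def] using DERIV_mult[OF P E] by blast
qed

lemma Qf_logderiv: assumes R: "R > 0" and z: "cmod z < R" and zL: "z \<notin> Ls"
  shows "(Qf R has_field_derivative Qf R z * ((\<Sum>\<omega>\<in>Ls - Tl R. zt \<omega> z) + infsum (\<lambda>\<omega>. zt \<omega> z) (Tl R))) (at z)"
proof -
  define A where "A = Ls - Tl R"
  have nz: "fac \<omega> z \<noteq> 0" if "\<omega> \<in> A" for \<omega> using that zL fac_zero_iff[of \<omega> z] by (auto simp: A_def)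
  have D: "(fac \<omega> has_field_derivative fac \<omega> z * zt \<omega> z) (at z)" if "\<omega> \<in> A" for \<omega>
    using that zL by (intro fac_deriv) (auto simp: A_def)
  have P: "((\<lambda>u. \<Prod>\<omega>\<in>A. fac \<omega> u) has_field_derivative (\<Prod>\<omega>\<in>A. fac \<omega> z) * (\<Sum>\<omega>\<in>A. fac \<omega> z * zt \<omega> z / fac \<omega> z)) (at z)"
    using has_field_derivative_prod'[of A "\<lambda>\<omega>. fac \<omega>" z "\<lambda>\<omega>. fac \<omega> z * zt \<omega> z"] nz D by blast
  have s: "(\<Sum>\<omega>\<in>A. fac \<omega> z * zt \<omega> z / fac \<omega> z) = (\<Sum>\<omega>\<in>A. zt \<omega> z)"
    by (rule sum.cong) (use nz in auto)
  have E: "((\<lambda>u. exp (Tsum R u)) has_field_derivative exp (Tsum R z) * infsum (\<lambda>\<omega>. zt \<omega> z) (Tl R)) (at z)"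
    by (rule DERIV_chain2[OF DERIV_exp conjunct1[OF Tsum_deriv[OF R z]]])
  have "(Qf R has_field_derivative
      (\<Prod>\<omega>\<in>A. fac \<omega> z) * (\<Sum>\<omega>\<in>A. zt \<omega> z) * exp (Tsum R z) + exp (Tsum R z) * infsum (\<lambda>\<omega>. zt \<omega> z) (Tl R) * (\<Prod>\<omega>\<in>A. fac \<omega> z)) (at z)"
    unfolding Qf_def[abs_def] A_def[symmetric] using DERIV_mult[OF P E] s by simp
  thus ?thesis by (simp add: Qf_def A_def[symmetric] algebra_simps)
qed

lemma Zf_zt: "Zf z = 1 / z + infsum (\<lambda>\<omega>. zt \<omega> z) Ls"
  by (simp add: Zf_def zt_def)

lemma sig_deriv_ex: "\<exists>D. (sig has_field_derivative D) (at z)"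
proof -
  define R where "R = cmod z + 1"
  have R: "R > 0" unfolding R_def using norm_ge_zero[of z] by linarith
  have zR: "cmod z < R" by (simp add: R_def)
  obtain D where D: "(Qf R has_field_derivative D) (at z)" using Qf_deriv_ex[OF R zR] by blast
  have "((\<lambda>u. u * Qf R u) has_field_derivative 1 * Qf R z + D * z) (at z)"
    by (rule DERIV_mult[OF DERIV_ident D])
  hence "(sig has_field_derivative 1 * Qf R z + D * z) (at z)"
    by (rule has_field_derivative_transform_within_open[where S = "ball 0 R"])
       (use zR sigma_rep[OF R] in auto)
  thus ?thesis by blast
qed

lemma sig_holo: "sig holomorphic_on UNIV"
  using sig_deriv_ex by (auto simp: holomorphic_on_open field_differentiable_def)

lemma sig_logderiv: assumes zL: "z \<notin> Lt" shows "(sig has_field_derivative sig z * Zf z) (at z)"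
proof -
  define R where "R = cmod z + 1"
  have R: "R > 0" unfolding R_def using norm_ge_zero[of z] by linarith
  have zR: "cmod z < R" by (simp add: R_def)
  have z0: "z \<noteq> 0" "z \<notin> Ls" using zL by auto
  define S where "S = (\<Sum>\<omega>\<in>Ls - Tl R. zt \<omega> z) + infsum (\<lambda>\<omega>. zt \<omega> z) (Tl R)"
  have "((\<lambda>u. u * Qf R u) has_field_derivative 1 * Qf R z + Qf R z * S * z) (at z)"
    unfolding S_def by (rule DERIV_mult[OF DERIV_ident Qf_logderiv[OF R zR z0(2)]])
  hence d: "(sig has_field_derivative 1 * Qf R z + Qf R z * S * z) (at z)"
    by (rule has_field_derivative_transform_within_open[where S = "ball 0 R"])
       (use zR sigma_rep[OF R] in auto)
  have "Zf z = 1 / z + S"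
    unfolding Zf_zt S_def using lat_split[where f=zt and z=z, OF conjunct2[OF Tsum_deriv[OF R zR]]] by simp
  hence zz: "z * Zf z = 1 + S * z" using z0(1) by (simp add: field_simps)
  have "sig z * Zf z = Qf R z * (z * Zf z)"
    using sigma_rep[OF R less_imp_le[OF zR]] by (simp add: mult_ac)
  also have "\<dots> = 1 * Qf R z + Qf R z * S * z" unfolding zz by (simp add: algebra_simps)
  finally have "sig z * Zf z = 1 * Qf R z + Qf R z * S * z" .
  thus ?thesis using d by simp
qed

lemma sig_zero_iff: "sig z = 0 \<longleftrightarrow> z \<in> Lt"
proof -
  define R where "R = cmod z + 1"
  have R: "R > 0" unfolding R_def using norm_ge_zero[of z] by linarith
  have zR: "cmod z \<le> R" by (simp add: R_def)
  have fin: "finite (Ls - Tl R)" by (rule finite_Ls_Tl)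
  have "sig z = 0 \<longleftrightarrow> z = 0 \<or> (\<exists>\<omega>\<in>Ls - Tl R. fac \<omega> z = 0)"
    using sigma_rep[OF R zR] fin by (simp add: Qf_def)
  also have "\<dots> \<longleftrightarrow> z = 0 \<or> z \<in> Ls - Tl R" using fac_zero_iff by auto
  also have "\<dots> \<longleftrightarrow> z \<in> Lt" by (auto simp: Tl_def R_def) (smt (verit) norm_ge_zero)
  finally show ?thesis .
qed

lemma Tsum_0: "Tsum R 0 = 0" by (simp add: Tsum_def lterm_0)

lemma sig_deriv0: "(sig has_field_derivative 1) (at 0)"
proof -
  have R: "(1::real) > 0" by simp
  have z: "cmod (0::complex) < 1" by simp
  obtain D where D: "(Qf 1 has_field_derivative D) (at 0)" using Qf_deriv_ex[OF R z] by blast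
  have "((\<lambda>u. u * Qf 1 u) has_field_derivative 1 * Qf 1 0 + D * 0) (at 0)"
    by (rule DERIV_mult[OF DERIV_ident D])
  hence "(sig has_field_derivative 1 * Qf 1 0 + D * 0) (at 0)"
    by (rule has_field_derivative_transform_within_open[where S = "ball 0 1"])
       (use sigma_rep[OF R] in auto)
  moreover have "Qf 1 0 = 1" by (simp add: Qf_def fac_0 Tsum_0)
  ultimately show ?thesis by simp
qed

lemma sig_0: "sig 0 = 0" using sig_zero_iff by simp

lemma Tl_neg: "\<omega> \<in> Tl R \<longleftrightarrow> - \<omega> \<in> Tl R" by (auto simp: Tl_def)

lemma sig_odd: "sig (- z) = - sig z"
proof -
  define R where "R = cmod z + 1"
  have R: "R > 0" unfolding R_def using norm_ge_zero[of z] by linarith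
  have zR: "cmod z \<le> R" "cmod (- z) \<le> R" by (simp_all add: R_def)
  have b1: "bij_betw uminus (Ls - Tl R) (Ls - Tl R)"
    by (rule bij_betwI[of _ _ _ uminus]) (auto simp: Tl_def)
  have b2: "bij_betw uminus (Tl R) (Tl R)"
    by (rule bij_betwI[of _ _ _ uminus]) (auto simp: Tl_def)
  have "(\<Prod>\<omega>\<in>Ls - Tl R. fac \<omega> (- z)) = (\<Prod>\<omega>\<in>Ls - Tl R. fac (- \<omega>) z)" by (simp add: fac_neg)
  also have "\<dots> = (\<Prod>\<omega>\<in>Ls - Tl R. fac \<omega> z)" by (rule prod.reindex_bij_betw[OF b1])
  finally have p: "(\<Prod>\<omega>\<in>Ls - Tl R. fac \<omega> (- z)) = (\<Prod>\<omega>\<in>Ls - Tl R. fac \<omega> z)" .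
  have "Tsum R (- z) = infsum (\<lambda>\<omega>. lterm (- \<omega>) z) (Tl R)" by (simp add: Tsum_def lterm_neg)
  also have "\<dots> = Tsum R z" unfolding Tsum_def by (rule infsum_reindex_bij_betw[OF b2])
  finally have t: "Tsum R (- z) = Tsum R z" .
  show ?thesis using sigma_rep[OF R zR(1)] sigma_rep[OF R zR(2)] p t by (simp add: Qf_def)
qed

end

context wlat begin

lemma w1_half: "w1 / 2 \<notin> Lt" using half_not_lat[of w1] by simp

lemma sig_shift_deriv: "c \<notin> Lt \<Longrightarrow> y + c \<notin> Lt \<Longrightarrow>
  ((\<lambda>z. sig (z + c)) has_field_derivative sig (y + c) * Zf (y + c)) (at y)"
  using DERIV_shift[of sig "sig (y + c) * Zf (y + c)" y c] sig_logderiv by simp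

lemma sig_quasi: assumes c: "c \<in> Lt"
  obtains C \<eta> where "C \<noteq> 0" "\<And>z. sig (z + c) = C * exp (\<eta> * z) * sig z"
proof -
  obtain \<eta> where eta: "\<And>z. z \<notin> Lt \<Longrightarrow> Zf (z + c) = Zf z + \<eta>" using Z_quasi[OF c] by blast
  define N where "N = (\<lambda>z. sig (z + c) * exp (- \<eta> * z))"
  define q where "q = (\<lambda>z. N z / sig z)"
  have qd: "(q has_field_derivative 0) (at y)" if "y \<in> - Lt" for y
  proof -
    have y: "y \<notin> Lt" "y + c \<notin> Lt" using that lat_add_iff1[OF c] by auto
    have s1: "((\<lambda>z. sig (z + c)) has_field_derivative sig (y + c) * Zf (y + c)) (at y)"
      using DERIV_shift[of sig "sig (y + c) * Zf (y + c)" y c] sig_logderiv[OF y(2)] by simp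
    have e: "((\<lambda>z. exp (- \<eta> * z)) has_field_derivative exp (- \<eta> * y) * (- \<eta>)) (at y)"
      using DERIV_chain2[OF DERIV_exp DERIV_cmult[OF DERIV_ident, of "- \<eta>"]] by simp
    have Nd: "(N has_field_derivative sig (y + c) * Zf (y + c) * exp (- \<eta> * y) + exp (- \<eta> * y) * (- \<eta>) * sig (y + c)) (at y)"
      unfolding N_def by (rule DERIV_mult[OF s1 e])
    have sn: "sig y \<noteq> 0" using y sig_zero_iff by auto
    have dq: "(q has_field_derivative
        ((sig (y + c) * Zf (y + c) * exp (- \<eta> * y) + exp (- \<eta> * y) * (- \<eta>) * sig (y + c)) * sig y - N y * (sig y * Zf y)) / (sig y * sig y)) (at y)"
      unfolding q_def by (rule DERIV_divide[OF Nd sig_logderiv[OF y(1)] sn])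
    have num0: "(sig (y + c) * Zf (y + c) * exp (- \<eta> * y) + exp (- \<eta> * y) * (- \<eta>) * sig (y + c)) * sig y - N y * (sig y * Zf y) = 0"
      using eta[OF y(1)] by (simp add: N_def algebra_simps)
    show ?thesis using dq unfolding num0 by simp
  qed
  have cont: "continuous_on (- Lt) q"
    by (rule DERIV_continuous_on[where D="\<lambda>_. 0"]) (use qd has_field_derivative_at_within in blast)
  obtain C where C: "\<And>y. y \<in> - Lt \<Longrightarrow> q y = C"
    by (rule DERIV_zero_connected_constant[OF connected_nlat open_nlat finite.emptyI cont]) (use qd in auto)
  have main: "sig (z + c) = C * exp (\<eta> * z) * sig z" for z
  proof (cases "z \<in> Lt")
    case True
    hence "z + c \<in> Lt" using lat_add c by blast
    hence "sig (z + c) = 0" "sig z = 0" using True sig_zero_iff by auto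
    thus ?thesis by simp
  next
    case False
    hence sn: "sig z \<noteq> 0" using sig_zero_iff by auto
    have "N z / sig z = C" using C[of z] False by (simp add: q_def)
    hence "N z = C * sig z" using sn by (simp add: field_simps)
    hence h1: "sig (z + c) * exp (- \<eta> * z) = C * sig z" by (simp add: N_def)
    have ee: "exp (- \<eta> * z) * exp (\<eta> * z) = 1" by (simp add: exp_add[symmetric])
    have "sig (z + c) = sig (z + c) * (exp (- \<eta> * z) * exp (\<eta> * z))" by (simp only: ee mult_1_right)
    also have "\<dots> = (sig (z + c) * exp (- \<eta> * z)) * exp (\<eta> * z)" by (simp only: mult.assoc)
    also have "\<dots> = C * sig z * exp (\<eta> * z)" by (simp only: h1)
    finally show ?thesis by (simp only: mult_ac)
  qed
  have "C \<noteq> 0"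
  proof
    assume "C = 0"
    hence "sig (w1 / 2 + c) = 0" using main by simp
    hence "w1 / 2 + c \<in> Lt" using sig_zero_iff by simp
    thus False using w1_half lat_add_iff1[OF c] by simp
  qed
  thus ?thesis using that main by blast
qed

lemma sig_deriv_lat: assumes c: "c \<in> Lt"
  obtains D where "D \<noteq> 0" "(sig has_field_derivative D) (at c)"
proof -
  obtain C \<eta> where C: "C \<noteq> 0" "\<And>z. sig (z + c) = C * exp (\<eta> * z) * sig z" using sig_quasi[OF c] by blast
  have e: "((\<lambda>z. C * exp (\<eta> * z)) has_field_derivative C * (exp (\<eta> * 0) * \<eta>)) (at 0)"
    by (rule DERIV_cmult, rule DERIV_chain2[OF DERIV_exp DERIV_cmult[OF DERIV_ident, of \<eta>], simplified])
  have "((\<lambda>z. C * exp (\<eta> * z) * sig z) has_field_derivative C * (exp (\<eta> * 0) * \<eta>) * sig 0 + 1 * (C * exp (\<eta> * 0))) (at 0)"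
    by (rule DERIV_mult[OF e sig_deriv0])
  hence "((\<lambda>z. sig (z + c)) has_field_derivative C) (at 0)" using C(2) sig_0 by simp
  hence "(sig has_field_derivative C) (at (0 + c))" using DERIV_shift[of sig C 0 c] by simp
  thus ?thesis using that C(1) by simp
qed

end

lemma isolated_from_finite:
  fixes S :: "complex set"
  assumes "finite (S \<inter> cball p 1)"
  shows "\<exists>r>0. \<forall>a. a \<in> ball p r \<longrightarrow> a \<noteq> p \<longrightarrow> a \<notin> S"
proof -
  define F where "F = S \<inter> cball p 1 - {p}"
  have "finite F" using assms by (simp add: F_def)
  hence "closed F" by (rule finite_imp_closed)
  hence "open (- F)" by (simp add: open_Compl)
  moreover have "p \<in> - F" by (simp add: F_def)
  ultimately obtain e where e: "e > 0" "ball p e \<subseteq> - F" using open_contains_ball by blast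
  show ?thesis
  proof (intro exI[of _ "min e 1"] conjI allI impI)
    show "min e 1 > 0" using e by simp
    fix a assume a: "a \<in> ball p (min e 1)" "a \<noteq> p"
    hence "a \<in> ball p e" "a \<in> cball p 1" by auto
    thus "a \<notin> S" using e a by (auto simp: F_def)
  qed
qed

lemma eventually_not_in:
  fixes S :: "complex set"
  assumes "\<exists>r>0. \<forall>a. a \<in> ball p r \<longrightarrow> a \<noteq> p \<longrightarrow> a \<notin> S"
  shows "\<forall>\<^sub>F a in at p. a \<notin> S"
proof -
  from assms obtain r where r: "r > 0" "\<And>a. a \<in> ball p r \<Longrightarrow> a \<noteq> p \<Longrightarrow> a \<notin> S" by blast
  show ?thesis unfolding eventually_at
    by (rule exI[of _ r]) (use r in \<open>auto simp: dist_commute\<close>)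
qed

context wlat begin

definition Sb :: "complex \<Rightarrow> complex set" where
  "Sb b = {a. a \<in> Lt \<or> a - b \<in> Lt \<or> a + b \<in> Lt}"

definition gfun :: "complex \<Rightarrow> complex \<Rightarrow> complex" where
  "gfun b a = sig a ^ 2 * sig b ^ 2 * (wpf b - wpf a) / (sig (a + b) * sig (a - b))"

lemma finite_Sb_ball: "finite (Sb b \<inter> cball p 1)"
proof -
  have "Sb b \<inter> cball p 1 \<subseteq> {\<omega> \<in> Lt. cmod (\<omega> - p) \<le> 1} \<union> (\<lambda>\<omega>. \<omega> + b) ` {\<omega> \<in> Lt. cmod (\<omega> - (p - b)) \<le> 1}
      \<union> (\<lambda>\<omega>. \<omega> - b) ` {\<omega> \<in> Lt. cmod (\<omega> - (p + b)) \<le> 1}"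
  proof
    fix a assume a: "a \<in> Sb b \<inter> cball p 1"
    hence d: "cmod (a - p) \<le> 1" by (simp add: dist_norm norm_minus_commute)
    consider "a \<in> Lt" | "a - b \<in> Lt" | "a + b \<in> Lt" using a by (auto simp: Sb_def)
    thus "a \<in> {\<omega> \<in> Lt. cmod (\<omega> - p) \<le> 1} \<union> (\<lambda>\<omega>. \<omega> + b) ` {\<omega> \<in> Lt. cmod (\<omega> - (p - b)) \<le> 1}
      \<union> (\<lambda>\<omega>. \<omega> - b) ` {\<omega> \<in> Lt. cmod (\<omega> - (p + b)) \<le> 1}"
    proof cases
      case 1 thus ?thesis using d by simp
    next
      case 2
      have "a - b \<in> {\<omega> \<in> Lt. cmod (\<omega> - (p - b)) \<le> 1}" using 2 d by (simp add: algebra_simps)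
      hence "a \<in> (\<lambda>\<omega>. \<omega> + b) ` {\<omega> \<in> Lt. cmod (\<omega> - (p - b)) \<le> 1}" by (rule rev_image_eqI) simp
      thus ?thesis by blast
    next
      case 3
      have "a + b \<in> {\<omega> \<in> Lt. cmod (\<omega> - (p + b)) \<le> 1}" using 3 d by (simp add: algebra_simps)
      hence "a \<in> (\<lambda>\<omega>. \<omega> - b) ` {\<omega> \<in> Lt. cmod (\<omega> - (p + b)) \<le> 1}" by (rule rev_image_eqI) simp
      thus ?thesis by blast
    qed
  qed
  moreover have "finite ({\<omega> \<in> Lt. cmod (\<omega> - p) \<le> 1} \<union> (\<lambda>\<omega>. \<omega> + b) ` {\<omega> \<in> Lt. cmod (\<omega> - (p - b)) \<le> 1}
      \<union> (\<lambda>\<omega>. \<omega> - b) ` {\<omega> \<in> Lt. cmod (\<omega> - (p + b)) \<le> 1})"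
    using finite_lat_ball' by simp
  ultimately show ?thesis by (rule finite_subset)
qed

lemma Sb_iso: "\<exists>r>0. \<forall>a. a \<in> ball p r \<longrightarrow> a \<noteq> p \<longrightarrow> a \<notin> Sb b"
  by (rule isolated_from_finite[OF finite_Sb_ball])

lemma ev_not_Sb: "\<forall>\<^sub>F a in at p. a \<notin> Sb b"
  by (rule eventually_not_in[OF Sb_iso])

lemma open_nSb: "open (- Sb b)"
  unfolding open_contains_ball
proof
  fix p assume p: "p \<in> - Sb b"
  obtain r where r: "r > 0" "\<And>a. a \<in> ball p r \<Longrightarrow> a \<noteq> p \<Longrightarrow> a \<notin> Sb b" using Sb_iso[of p b] by blast
  show "\<exists>e>0. ball p e \<subseteq> - Sb b"
  proof (intro exI[of _ r] conjI subsetI)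
    show "r > 0" by (rule r(1))
    fix x assume x: "x \<in> ball p r"
    show "x \<in> - Sb b"
    proof (cases "x = p")
      case True thus ?thesis using p by simp
    next
      case False thus ?thesis using r(2)[OF x] by simp
    qed
  qed
qed

lemma Lt_sub_Sb: "Lt \<subseteq> Sb b" by (auto simp: Sb_def)

lemma Sb_shift: "c \<in> Lt \<Longrightarrow> y + c \<in> Sb b \<longleftrightarrow> y \<in> Sb b"
proof -
  assume c: "c \<in> Lt"
  have 1: "y + c - b = (y - b) + c" "y + c + b = (y + b) + c" by (simp_all add: algebra_simps)
  show ?thesis unfolding Sb_def using lat_add_iff1[OF c] by (simp add: 1)
qed

lemma Sb_neg: "Sb (- b) = Sb b" by (auto simp: Sb_def)

lemma gfun_neg: "gfun (- b) = gfun b"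
  by (rule ext) (simp add: gfun_def sig_odd wp_even mult.commute)

lemma sig_shift_D: "\<exists>D. ((\<lambda>a. sig (a + c)) has_field_derivative D) (at a)"
proof -
  obtain D where "(sig has_field_derivative D) (at (a + c))" using sig_deriv_ex by blast
  thus ?thesis using DERIV_shift[of sig D a c] by blast
qed

lemma sig_shift_D': "\<exists>D. ((\<lambda>a. sig (a - c)) has_field_derivative D) (at a)"
  using sig_shift_D[of "- c" a] by simp

lemma sig_isCont: "isCont sig z"
  using sig_deriv_ex DERIV_isCont by blast

lemma gfun_deriv: assumes a: "a \<notin> Sb b" shows "\<exists>D. (gfun b has_field_derivative D) (at a)"
proof -
  have aL: "a \<notin> Lt" "a + b \<notin> Lt" "a - b \<notin> Lt" using a by (auto simp: Sb_def)
  obtain D1 where D1: "(sig has_field_derivative D1) (at a)" using sig_deriv_ex by blast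
  obtain D2 where D2: "((\<lambda>a. sig (a + b)) has_field_derivative D2) (at a)" using sig_shift_D by blast
  obtain D3 where D3: "((\<lambda>a. sig (a - b)) has_field_derivative D3) (at a)" using sig_shift_D' by blast
  have nz: "sig (a + b) * sig (a - b) \<noteq> 0" using aL sig_zero_iff by simp
  have sq: "((\<lambda>a. sig a ^ 2) has_field_derivative of_nat 2 * (D1 * sig a ^ (2 - Suc 0))) (at a)"
    by (rule DERIV_power[OF D1])
  have n1: "((\<lambda>a. sig a ^ 2 * sig b ^ 2) has_field_derivative of_nat 2 * (D1 * sig a ^ (2 - Suc 0)) * sig b ^ 2) (at a)"
    by (rule DERIV_cmult_right[OF sq])
  have n2: "((\<lambda>a. wpf b - wpf a) has_field_derivative 0 - wpd a) (at a)"
    by (rule DERIV_diff[OF DERIV_const wp_deriv[OF aL(1)]])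
  have num: "((\<lambda>a. sig a ^ 2 * sig b ^ 2 * (wpf b - wpf a)) has_field_derivative
     (of_nat 2 * (D1 * sig a ^ (2 - Suc 0))) * sig b ^ 2 * (wpf b - wpf a) + (0 - wpd a) * (sig a ^ 2 * sig b ^ 2)) (at a)"
    by (rule DERIV_mult[OF n1 n2])
  have den: "((\<lambda>a. sig (a + b) * sig (a - b)) has_field_derivative D2 * sig (a - b) + D3 * sig (a + b)) (at a)"
    by (rule DERIV_mult[OF D2 D3])
  from DERIV_divide[OF num den nz] show ?thesis unfolding gfun_def[abs_def] by blast
qed

lemma gfun_holo: "gfun b holomorphic_on - Sb b"
  using gfun_deriv open_nSb by (auto simp: holomorphic_on_open field_differentiable_def)

lemma gfun_periodic: assumes a: "a \<notin> Sb b" and c: "c \<in> Lt" shows "gfun b (a + c) = gfun b a"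
proof -
  obtain C \<eta> where C: "C \<noteq> 0" "\<And>z. sig (z + c) = C * exp (\<eta> * z) * sig z" using sig_quasi[OF c] by blast
  have aL: "a \<notin> Lt" using a by (auto simp: Sb_def)
  have w: "wpf (a + c) = wpf a" by (rule wp_periodic[OF c aL])
  have s1: "sig (a + c + b) = C * exp (\<eta> * (a + b)) * sig (a + b)" using C(2)[of "a + b"] by (simp add: algebra_simps)
  have s2: "sig (a + c - b) = C * exp (\<eta> * (a - b)) * sig (a - b)" using C(2)[of "a - b"] by (simp add: algebra_simps)
  have e1: "exp (\<eta> * (a + b)) = exp (\<eta> * a) * exp (\<eta> * b)" by (simp add: distrib_left exp_add)
  have e2: "exp (\<eta> * (a - b)) = exp (\<eta> * a) / exp (\<eta> * b)" by (simp add: right_diff_distrib exp_diff)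
  have ne: "exp (\<eta> * a) \<noteq> 0" "exp (\<eta> * b) \<noteq> 0" by simp_all
  define K where "K = C * C * exp (\<eta> * a) * exp (\<eta> * a)"
  have K: "K \<noteq> 0" using C(1) by (simp add: K_def)
  have n: "sig (a + c) ^ 2 * sig b ^ 2 * (wpf b - wpf (a + c)) = K * (sig a ^ 2 * sig b ^ 2 * (wpf b - wpf a))"
    unfolding w C(2)[of a] K_def by (simp add: power2_eq_square mult_ac)
  have d: "sig (a + c + b) * sig (a + c - b) = K * (sig (a + b) * sig (a - b))"
    unfolding s1 s2 e1 e2 K_def using ne by (simp add: field_simps)
  show ?thesis unfolding gfun_def n d using K by (rule mult_divide_mult_cancel_left)
qed

end

lemma cancel_aux: "(d::complex) \<noteq> 0 \<Longrightarrow> X * (- (u / d)) / (Y * (v / d)) = X * (- u) / (Y * v)"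
  by (cases "Y * v = 0") (auto simp: field_simps)

lemma cancel_aux2: "(d::complex) \<noteq> 0 \<Longrightarrow> (s / d) ^ 2 * (d ^ 2 * B - d ^ 2 * A) = s ^ 2 * (B - A)"
  by (simp add: field_simps power2_eq_square)

context wlat begin

lemma P0_cont0: "isCont P0 0"
  using P0_deriv[of 0] DERIV_isCont by auto

lemma ev_not_Lt: "\<forall>\<^sub>F a in at p. a \<notin> Lt"
  using ev_not_Sb[where p=p and b=0] Lt_sub_Sb by (auto elim!: eventually_mono)

lemma ev_neq: "\<forall>\<^sub>F a in at p. a \<noteq> (p::complex)"
  by (simp add: eventually_at_filter)

lemma wp_near_lat: assumes p: "p \<in> Lt" shows "((\<lambda>a. (a - p) ^ 2 * wpf a) \<longlongrightarrow> 1) (at p)"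
proof -
  have c: "isCont (\<lambda>a. 1 + (a - p) ^ 2 * P0 (a - p)) p"
    by (intro continuous_intros isCont_o2[where g = P0 and f = "\<lambda>a. a - p"]) (simp_all add: P0_cont0)
  hence t: "((\<lambda>a. 1 + (a - p) ^ 2 * P0 (a - p)) \<longlongrightarrow> 1) (at p)"
    by (simp add: isCont_def)
  have ev: "\<forall>\<^sub>F a in at p. 1 + (a - p) ^ 2 * P0 (a - p) = (a - p) ^ 2 * wpf a"
    using eventually_conj[OF ev_not_Lt ev_neq]
  proof (rule eventually_mono)
    fix a assume a: "a \<notin> Lt \<and> a \<noteq> p"
    have a1: "a - p \<notin> Lt" using a lat_diff_iff1[OF p] by simp
    have "wpf a = wpf ((a - p) + p)" by simp
    also have "\<dots> = wpf (a - p)" by (rule wp_periodic[OF p a1])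
    finally have "wpf a = 1 / (a - p) ^ 2 + P0 (a - p)" by (simp add: wp_P0)
    thus "1 + (a - p) ^ 2 * P0 (a - p) = (a - p) ^ 2 * wpf a" using a by (simp add: field_simps)
  qed
  show ?thesis by (rule Lim_transform_eventually[OF t ev])
qed

lemma sig_shift_tendsto: "((\<lambda>a. sig (a + c)) \<longlongrightarrow> sig (p + c)) (at p)"
  by (rule isCont_tendsto_compose[OF sig_isCont]) (intro tendsto_intros)

lemma sig_tendsto: "(sig \<longlongrightarrow> sig p) (at p)"
  using sig_isCont by (simp add: isCont_def)

lemma lim_lat:
  assumes p: "p \<in> Lt" and b: "b \<notin> Lt" and D: "(sig has_field_derivative D) (at p)"
  shows "(gfun b \<longlongrightarrow> (- (sig b ^ 2 * D ^ 2 / (sig (p + b) * sig (p - b))))) (at p)"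
proof -
  have sp: "sig p = 0" using p sig_zero_iff by simp
  have q1: "((\<lambda>a. sig a / (a - p)) \<longlongrightarrow> D) (at p)" using D sp by (simp add: has_field_derivative_iff)
  have q2: "((\<lambda>a. (a - p) ^ 2 * wpf a) \<longlongrightarrow> 1) (at p)" by (rule wp_near_lat[OF p])
  have q0: "((\<lambda>a. (a - p) ^ 2) \<longlongrightarrow> 0) (at p)"
  proof -
    have "((\<lambda>a. (a - p) ^ 2) \<longlongrightarrow> (p - p) ^ 2) (at p)" by (intro tendsto_intros)
    thus ?thesis by simp
  qed
  have s1: "((\<lambda>a. sig (a + b)) \<longlongrightarrow> sig (p + b)) (at p)" by (rule sig_shift_tendsto)
  have s2: "((\<lambda>a. sig (a + - b)) \<longlongrightarrow> sig (p + - b)) (at p)" by (rule sig_shift_tendsto)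
  have nz: "sig (p + b) * sig (p + - b) \<noteq> 0" using p b sig_zero_iff lat_add_iff1 lat_diff_iff1
    by (metis add_uminus_conv_diff lat_uminus_iff add.commute mult_eq_0_iff)
  have H: "((\<lambda>a. sig b ^ 2 * ((sig a / (a - p)) ^ 2 * ((a - p) ^ 2 * wpf b - (a - p) ^ 2 * wpf a)) / (sig (a + b) * sig (a + - b)))
      \<longlongrightarrow> sig b ^ 2 * (D ^ 2 * (0 * wpf b - 1)) / (sig (p + b) * sig (p + - b))) (at p)"
    by (intro tendsto_divide tendsto_mult tendsto_diff tendsto_const q1 q2 q0 tendsto_power s1 s2 nz)
  have ev: "\<forall>\<^sub>F a in at p. sig b ^ 2 * ((sig a / (a - p)) ^ 2 * ((a - p) ^ 2 * wpf b - (a - p) ^ 2 * wpf a)) / (sig (a + b) * sig (a + - b)) = gfun b a"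
    using ev_neq
  proof (rule eventually_mono)
    fix a assume a: "a \<noteq> p"
    have "(sig a / (a - p)) ^ 2 * ((a - p) ^ 2 * wpf b - (a - p) ^ 2 * wpf a) = sig a ^ 2 * (wpf b - wpf a)"
      using a by (intro cancel_aux2) simp
    thus "sig b ^ 2 * ((sig a / (a - p)) ^ 2 * ((a - p) ^ 2 * wpf b - (a - p) ^ 2 * wpf a)) / (sig (a + b) * sig (a + - b)) = gfun b a"
      by (simp add: gfun_def mult_ac)
  qed
  have "(gfun b \<longlongrightarrow> sig b ^ 2 * (D ^ 2 * (0 * wpf b - 1)) / (sig (p + b) * sig (p + - b))) (at p)"
    by (rule Lim_transform_eventually[OF H ev])
  thus ?thesis by simp
qed

lemma lim_shift:
  assumes b: "b \<notin> Lt" "b + b \<notin> Lt" and pb: "p - b \<in> Lt"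
  shows "\<exists>L. (gfun b \<longlongrightarrow> L) (at p)"
proof -
  define l where "l = p - b"
  have l: "l \<in> Lt" using pb by (simp add: l_def)
  have pl: "p = b + l" by (simp add: l_def)
  have pL: "p \<notin> Lt" using b(1) l lat_add_iff1[OF l] by (simp add: pl)
  have e: "p + b = (b + b) + l" unfolding pl by (simp add: algebra_simps)
  have pbL: "p + b \<notin> Lt" by (metis e lat_add_iff1[OF l] b(2))
  obtain D' where D': "D' \<noteq> 0" "(sig has_field_derivative D') (at l)" using sig_deriv_lat[OF l] by blast
  have "(sig has_field_derivative D') (at (p + - b))" using D'(2) by (simp add: l_def)
  hence "((\<lambda>a. sig (a + - b)) has_field_derivative D') (at p)" using DERIV_shift[of sig D' p "- b"] by simp
  hence q4: "((\<lambda>a. sig (a + - b) / (a - p)) \<longlongrightarrow> D') (at p)"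
    using sig_zero_iff[of "p + - b"] l by (simp add: has_field_derivative_iff l_def)
  have q3: "((\<lambda>a. (wpf a - wpf p) / (a - p)) \<longlongrightarrow> wpd p) (at p)"
    using wp_deriv[OF pL] by (simp add: has_field_derivative_iff)
  have wpb: "wpf p = wpf b" unfolding pl using wp_periodic[OF l b(1)] by (simp add: add.commute)
  have nz: "sig (p + b) * D' \<noteq> 0" using pbL sig_zero_iff D'(1) by simp
  have H: "((\<lambda>a. sig a ^ 2 * sig b ^ 2 * (- ((wpf a - wpf p) / (a - p))) / (sig (a + b) * (sig (a + - b) / (a - p))))
     \<longlongrightarrow> sig p ^ 2 * sig b ^ 2 * (- wpd p) / (sig (p + b) * D')) (at p)"
    by (intro tendsto_divide tendsto_mult tendsto_minus tendsto_const q3 q4 tendsto_power sig_tendsto sig_shift_tendsto nz)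
  have ev: "\<forall>\<^sub>F a in at p. sig a ^ 2 * sig b ^ 2 * (- ((wpf a - wpf p) / (a - p))) / (sig (a + b) * (sig (a + - b) / (a - p))) = gfun b a"
    using ev_neq
  proof (rule eventually_mono)
    fix a assume a: "a \<noteq> p"
    hence "a - p \<noteq> 0" by simp
    from cancel_aux[OF this, of "sig a ^ 2 * sig b ^ 2" "wpf a - wpf p" "sig (a + b)" "sig (a + - b)"]
    show "sig a ^ 2 * sig b ^ 2 * (- ((wpf a - wpf p) / (a - p))) / (sig (a + b) * (sig (a + - b) / (a - p))) = gfun b a"
      by (simp add: gfun_def wpb)
  qed
  show ?thesis using Lim_transform_eventually[OF H ev] by blast
qed

lemma lim_Sb:
  assumes b: "b \<notin> Lt" "b + b \<notin> Lt" and p: "p \<in> Sb b"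
  shows "\<exists>L. (gfun b \<longlongrightarrow> L) (at p)"
proof -
  consider "p \<in> Lt" | "p - b \<in> Lt" | "p + b \<in> Lt" using p by (auto simp: Sb_def)
  thus ?thesis
  proof cases
    case 1
    obtain D where "(sig has_field_derivative D) (at p)" using sig_deriv_ex by blast
    thus ?thesis using lim_lat[OF 1 b(1)] by blast
  next
    case 2 thus ?thesis by (rule lim_shift[OF b])
  next
    case 3
    have "- b \<notin> Lt" "- b + - b \<notin> Lt" "p - - b \<in> Lt" using b 3 by (simp_all add: lat_uminus_iff[of "b + b", symmetric])
    from lim_shift[OF this] show ?thesis by (simp add: gfun_neg)
  qed
qed

lemma lim_0: assumes b: "b \<notin> Lt" shows "(gfun b \<longlongrightarrow> 1) (at 0)"
proof -
  have "(gfun b \<longlongrightarrow> (- (sig b ^ 2 * 1 ^ 2 / (sig (0 + b) * sig (0 - b))))) (at 0)"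
    by (rule lim_lat[OF lat_0 b sig_deriv0])
  moreover have "sig b \<noteq> 0" using b sig_zero_iff by simp
  ultimately show ?thesis by (simp add: sig_odd power2_eq_square)
qed

end

context wlat begin

definition Gf :: "complex \<Rightarrow> complex \<Rightarrow> complex" where
  "Gf b a = (if a \<in> Sb b then Lim (at a) (gfun b) else gfun b a)"

lemma Gf_deriv: assumes b: "b \<notin> Lt" "b + b \<notin> Lt" shows "\<exists>D. (Gf b has_field_derivative D) (at p)"
proof (cases "p \<in> Sb b")
  case False
  obtain D where D: "(gfun b has_field_derivative D) (at p)" using gfun_deriv[OF False] by blast
  have "(Gf b has_field_derivative D) (at p)"
    by (rule has_field_derivative_transform_within_open[OF D open_nSb]) (use False in \<open>auto simp: Gf_def\<close>)
  thus ?thesis by blast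
next
  case True
  obtain r where r: "r > 0" "\<And>a. a \<in> ball p r \<Longrightarrow> a \<noteq> p \<Longrightarrow> a \<notin> Sb b" using Sb_iso[of p b] by blast
  obtain L where L: "(gfun b \<longlongrightarrow> L) (at p)" using lim_Sb[OF b True] by blast
  have LL: "Lim (at p) (gfun b) = L" by (rule tendsto_Lim[OF _ L]) simp
  have "gfun b holomorphic_on ball p r - {p}"
    by (rule holomorphic_on_subset[OF gfun_holo]) (use r in auto)
  hence h: "(\<lambda>y. if y = p then L else gfun b y) holomorphic_on ball p r"
    by (rule removable_singularity[OF _ open_ball L])
  have "\<exists>D. ((\<lambda>y. if y = p then L else gfun b y) has_field_derivative D) (at p)"
    using h r(1) by (simp add: holomorphic_on_open)
  then obtain D where D: "((\<lambda>y. if y = p then L else gfun b y) has_field_derivative D) (at p)" by blast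
  have "(Gf b has_field_derivative D) (at p)"
  proof (rule has_field_derivative_transform_within_open[OF D open_ball])
    show "p \<in> ball p r" using r by simp
    fix y assume y: "y \<in> ball p r"
    show "(if y = p then L else gfun b y) = Gf b y"
      using True LL r(2)[OF y] by (auto simp: Gf_def)
  qed
  thus ?thesis by blast
qed

lemma Gf_holo: "b \<notin> Lt \<Longrightarrow> b + b \<notin> Lt \<Longrightarrow> Gf b holomorphic_on UNIV"
  using Gf_deriv by (auto simp: holomorphic_on_open field_differentiable_def)

lemma Gf_isCont: "b \<notin> Lt \<Longrightarrow> b + b \<notin> Lt \<Longrightarrow> isCont (Gf b) a"
  using Gf_deriv DERIV_isCont by blast

lemma Gf_periodic: assumes b: "b \<notin> Lt" "b + b \<notin> Lt" and c: "c \<in> Lt" shows "Gf b (a + c) = Gf b a"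
proof -
  have t1: "((\<lambda>y. Gf b (y + c)) \<longlongrightarrow> Gf b (a + c)) (at a)"
    by (rule isCont_tendsto_compose[OF Gf_isCont[OF b]]) (intro tendsto_intros)
  have t2: "(Gf b \<longlongrightarrow> Gf b a) (at a)" using Gf_isCont[OF b] by (simp add: isCont_def)
  have ev: "\<forall>\<^sub>F y in at a. Gf b (y + c) = Gf b y"
    using ev_not_Sb
  proof (rule eventually_mono)
    fix y assume y: "y \<notin> Sb b"
    hence y': "y + c \<notin> Sb b" using Sb_shift[OF c] by simp
    show "Gf b (y + c) = Gf b y" using y y' gfun_periodic[OF y c] by (simp add: Gf_def)
  qed
  have "(Gf b \<longlongrightarrow> Gf b (a + c)) (at a)" by (rule Lim_transform_eventually[OF t1 ev])
  thus ?thesis using t2 tendsto_unique[of "at a"] by (metis at_neq_bot)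
qed

lemma coords: "\<exists>s t :: real. a = of_real s * w1 + of_real t * w2"
proof -
  define \<tau> where "\<tau> = w2 / w1"
  define t where "t = Im (a / w1) / Im \<tau>"
  define s where "s = Re (a / w1) - t * Re \<tau>"
  have ti: "Im \<tau> \<noteq> 0" using tau_im by (simp add: \<tau>_def)
  have "a / w1 = of_real s + of_real t * \<tau>"
    by (rule complex_eqI) (use ti in \<open>simp_all add: s_def t_def\<close>)
  hence "a = w1 * (of_real s + of_real t * \<tau>)" using w1_nz by (simp add: field_simps)
  also have "\<dots> = of_real s * w1 + of_real t * w2" using w1_nz by (simp add: \<tau>_def field_simps)
  finally show ?thesis by blast
qed

lemma Gf_bounded: assumes b: "b \<notin> Lt" "b + b \<notin> Lt" shows "bounded (range (Gf b))"
proof -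
  define K where "K = (\<lambda>x. of_real (fst x) * w1 + of_real (snd x) * w2) ` ({0..1::real} \<times> {0..1::real})"
  have "compact K" unfolding K_def
    by (intro compact_continuous_image continuous_intros compact_Times compact_Icc)
  moreover have "continuous_on K (Gf b)"
    using holomorphic_on_imp_continuous_on[OF Gf_holo[OF b]] continuous_on_subset by blast
  ultimately have "compact (Gf b ` K)" by (rule compact_continuous_image[rotated])
  hence bd: "bounded (Gf b ` K)" by (rule compact_imp_bounded)
  have "range (Gf b) \<subseteq> Gf b ` K"
  proof
    fix y assume "y \<in> range (Gf b)"
    then obtain a where a: "y = Gf b a" by blast
    obtain s t :: real where st: "a = of_real s * w1 + of_real t * w2" using coords by blast
    define m where "m = floor s"
    define n where "n = floor t"
    define k where "k = of_real (s - of_int m) * w1 + of_real (t - of_int n) * w2"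
    have kK: "k \<in> K" unfolding K_def k_def
      by (rule image_eqI[of _ _ "(s - of_int m, t - of_int n)"])
         (auto simp: m_def n_def intro: less_imp_le[OF frac_lt_1[unfolded frac_def]])
    have "a = k + lp m n" by (simp add: st k_def lp_def algebra_simps)
    hence "Gf b a = Gf b k" using Gf_periodic[OF b lat_lp] by simp
    thus "y \<in> Gf b ` K" using a kK by blast
  qed
  thus ?thesis using bd bounded_subset by blast
qed

lemma gfun_one: assumes b: "b \<notin> Lt" "b + b \<notin> Lt" and a: "a \<notin> Sb b" shows "gfun b a = 1"
proof -
  have "Gf b constant_on UNIV" by (rule Liouville_theorem[OF Gf_holo[OF b] Gf_bounded[OF b]])
  hence "Gf b a = Gf b 0" by (auto simp: constant_on_def)
  moreover have "Gf b 0 = 1"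
  proof -
    have "0 \<in> Sb b" by (simp add: Sb_def)
    moreover have "Lim (at 0) (gfun b) = 1" by (rule tendsto_Lim[OF _ lim_0[OF b(1)]]) simp
    ultimately show ?thesis by (simp add: Gf_def)
  qed
  ultimately show ?thesis using a by (simp add: Gf_def)
qed

lemma sigma_id0:
  assumes a: "a \<notin> Lt" and b: "b \<notin> Lt" "b + b \<notin> Lt"
  shows "sig (a + b) * sig (a - b) = sig a ^ 2 * sig b ^ 2 * (wpf b - wpf a)"
proof (cases "a \<in> Sb b")
  case True
  then consider "a - b \<in> Lt" | "a + b \<in> Lt" using a by (auto simp: Sb_def)
  thus ?thesis
  proof cases
    case 1
    have "wpf a = wpf (b + (a - b))" by simp
    also have "\<dots> = wpf b" by (rule wp_periodic[OF 1 b(1)])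
    finally show ?thesis using 1 sig_zero_iff by simp
  next
    case 2
    have "wpf a = wpf (- b + (a + b))" by simp
    also have "\<dots> = wpf (- b)" by (rule wp_periodic[OF 2]) (use b in simp)
    finally show ?thesis using 2 sig_zero_iff wp_even by simp
  qed
next
  case False
  have nz: "sig (a + b) * sig (a - b) \<noteq> 0" using False sig_zero_iff by (auto simp: Sb_def)
  have "gfun b a = 1" by (rule gfun_one[OF b False])
  thus ?thesis using nz by (simp add: gfun_def field_simps)
qed

lemma wp_isCont: "z \<notin> Lt \<Longrightarrow> isCont wpf z"
  using wp_deriv DERIV_isCont by blast

lemma sigma_id:
  assumes a: "a \<notin> Lt" and b: "b \<notin> Lt"
  shows "sig (a + b) * sig (a - b) = sig a ^ 2 * sig b ^ 2 * (wpf b - wpf a)"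
proof -
  define F1 where "F1 = (\<lambda>x. sig (a + x) * sig (a - x))"
  define F2 where "F2 = (\<lambda>x. sig a ^ 2 * sig x ^ 2 * (wpf x - wpf a))"
  have t1: "(F1 \<longlongrightarrow> F1 b) (at b)" unfolding F1_def
    by (intro tendsto_intros isCont_tendsto_compose[OF sig_isCont])
  have t2: "(F2 \<longlongrightarrow> F2 b) (at b)" unfolding F2_def
    by (intro tendsto_intros isCont_tendsto_compose[OF sig_isCont] isCont_tendsto_compose[OF wp_isCont[OF b]])
  have fin: "finite (Lt \<inter> cball (b + b) 1)"
    by (rule finite_subset[OF _ finite_lat_ball'[of "b + b" 1]]) (auto simp: dist_norm norm_minus_commute)
  obtain r where r: "r > 0" "\<And>x. x \<in> ball (b + b) r \<Longrightarrow> x \<noteq> b + b \<Longrightarrow> x \<notin> Lt"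
    using isolated_from_finite[OF fin] by blast
  have ev2: "\<forall>\<^sub>F x in at b. x + x \<notin> Lt"
    unfolding eventually_at
  proof (intro exI[of _ "r / 2"] conjI ballI impI)
    show "r / 2 > 0" using r by simp
    fix x assume x: "x \<in> UNIV" "x \<noteq> b \<and> dist x b < r / 2"
    have "dist (x + x) (b + b) \<le> dist x b + dist x b"
      by (metis dist_triangle_add)
    hence "x + x \<in> ball (b + b) r" using x by (simp add: dist_commute)
    moreover have "x + x \<noteq> b + b" using x by (auto simp: mult_2[symmetric])
    ultimately show "x + x \<notin> Lt" using r(2) by blast
  qed
  have ev: "\<forall>\<^sub>F x in at b. F1 x = F2 x"
    using eventually_conj[OF ev_not_Lt ev2]
    by (rule eventually_mono) (use a sigma_id0 in \<open>auto simp: F1_def F2_def\<close>)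
  have "(F2 \<longlongrightarrow> F1 b) (at b)" by (rule Lim_transform_eventually[OF t1 ev])
  hence "F1 b = F2 b" using t2 tendsto_unique[of "at b"] by (metis at_neq_bot)
  thus ?thesis by (simp add: F1_def F2_def)
qed

end

context wlat begin

lemma open_U3: "open {x. x \<notin> Lt \<and> f1 x \<notin> Lt \<and> f2 x \<notin> Lt}"
  if "\<And>x. continuous (at x) f1" "\<And>x. continuous (at x) f2" for f1 f2 :: "complex \<Rightarrow> complex"
proof -
  have "{x. x \<notin> Lt \<and> f1 x \<notin> Lt \<and> f2 x \<notin> Lt} = - Lt \<inter> (f1 -` (- Lt)) \<inter> (f2 -` (- Lt))" by auto
  moreover have "open (f1 -` (- Lt))" "open (f2 -` (- Lt))"
    using continuous_open_vimage[OF open_nlat] that by auto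
  ultimately show ?thesis using open_nlat by (simp add: open_Int)
qed

lemma sig_plus_deriv: "a + b \<notin> Lt \<Longrightarrow> ((\<lambda>x. sig (a + x)) has_field_derivative sig (a + b) * Zf (a + b)) (at b)"
  using DERIV_shift[of sig "sig (a + b) * Zf (a + b)" b a] sig_logderiv by (simp add: add.commute)

lemma sig_minus_deriv: "a - b \<notin> Lt \<Longrightarrow> ((\<lambda>x. sig (a - x)) has_field_derivative sig (a - b) * Zf (a - b) * (- 1)) (at b)"
proof -
  assume h: "a - b \<notin> Lt"
  have "((\<lambda>x. a - x) has_field_derivative 0 - 1) (at b)" by (intro DERIV_diff DERIV_const DERIV_ident)
  from DERIV_chain2[OF sig_logderiv[OF h] this] show ?thesis by simp
qed

lemma zeta_add:
  assumes a: "a \<notin> Lt" and b: "b \<notin> Lt" and ab: "a + b \<notin> Lt" "a - b \<notin> Lt"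
  shows "wpf b \<noteq> wpf a \<and> Zf (a + b) - Zf (a - b) = 2 * Zf b + wpd b / (wpf b - wpf a)"
proof -
  define U where "U = {x. x \<notin> Lt \<and> a + x \<notin> Lt \<and> a - x \<notin> Lt}"
  have U: "open U" unfolding U_def by (rule open_U3) (intro continuous_intros)+
  have bU: "b \<in> U" using b ab by (simp add: U_def)
  define D1 where "D1 = sig (a + b) * Zf (a + b) * sig (a - b) + sig (a - b) * Zf (a - b) * (- 1) * sig (a + b)"
  have d1: "((\<lambda>x. sig (a + x) * sig (a - x)) has_field_derivative D1) (at b)"
    unfolding D1_def by (rule DERIV_mult[OF sig_plus_deriv[OF ab(1)] sig_minus_deriv[OF ab(2)]])
  have sq: "((\<lambda>x. sig x ^ 2) has_field_derivative of_nat 2 * (sig b * Zf b * sig b ^ (2 - Suc 0))) (at b)"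
    by (rule DERIV_power[OF sig_logderiv[OF b]])
  have w: "((\<lambda>x. wpf x - wpf a) has_field_derivative wpd b - 0) (at b)"
    by (rule DERIV_diff[OF wp_deriv[OF b] DERIV_const])
  define D2 where "D2 = sig a ^ 2 * (of_nat 2 * (sig b * Zf b * sig b ^ (2 - Suc 0)) * (wpf b - wpf a) + (wpd b - 0) * sig b ^ 2)"
  have d2: "((\<lambda>x. sig a ^ 2 * (sig x ^ 2 * (wpf x - wpf a))) has_field_derivative D2) (at b)"
    unfolding D2_def by (rule DERIV_cmult[OF DERIV_mult[OF sq w]])
  have d2': "((\<lambda>x. sig (a + x) * sig (a - x)) has_field_derivative D2) (at b)"
  proof (rule has_field_derivative_transform_within_open[OF d2 U bU])
    fix x assume "x \<in> U"
    hence "x \<notin> Lt" by (simp add: U_def)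
    thus "sig a ^ 2 * (sig x ^ 2 * (wpf x - wpf a)) = sig (a + x) * sig (a - x)"
      using sigma_id[OF a] by (simp add: mult.assoc)
  qed
  have eq: "D1 = D2" by (rule DERIV_unique[OF d1 d2'])
  define W where "W = wpf b - wpf a"
  have P: "sig (a + b) * sig (a - b) = sig a ^ 2 * sig b ^ 2 * W" unfolding W_def by (rule sigma_id[OF a b])
  have Pnz: "sig (a + b) * sig (a - b) \<noteq> 0" using ab sig_zero_iff by simp
  hence Wnz: "W \<noteq> 0" using P by auto
  have Qnz: "sig a \<noteq> 0" "sig b \<noteq> 0" using a b sig_zero_iff by auto
  have "D1 = sig (a + b) * sig (a - b) * (Zf (a + b) - Zf (a - b))" by (simp add: D1_def algebra_simps)
  also have "\<dots> = sig a ^ 2 * sig b ^ 2 * W * (Zf (a + b) - Zf (a - b))" by (simp add: P)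
  finally have "sig a ^ 2 * sig b ^ 2 * W * (Zf (a + b) - Zf (a - b)) = sig a ^ 2 * sig b ^ 2 * (2 * Zf b * W + wpd b)"
    using eq by (simp add: D2_def W_def power2_eq_square algebra_simps)
  hence "W * (Zf (a + b) - Zf (a - b)) = 2 * Zf b * W + wpd b" using Qnz by (simp add: mult.assoc)
  hence "Zf (a + b) - Zf (a - b) = 2 * Zf b + wpd b / W" using Wnz by (simp add: field_simps)
  thus ?thesis using Wnz by (simp add: W_def)
qed

lemma wp_add:
  assumes a: "a \<notin> Lt" and b: "b \<notin> Lt" and ab: "a + b \<notin> Lt" "a - b \<notin> Lt"
  shows "wpf (a - b) - wpf (a + b) = wpd a * wpd b / (wpf a - wpf b) ^ 2"
proof -
  define V where "V = {x. x \<notin> Lt \<and> x + b \<notin> Lt \<and> x - b \<notin> Lt}"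
  have V: "open V" unfolding V_def by (rule open_U3) (intro continuous_intros)+
  have aV: "a \<in> V" using a ab by (simp add: V_def)
  have W: "wpf b - wpf a \<noteq> 0" using zeta_add[OF a b ab] by simp
  have z1: "((\<lambda>x. Zf (x + b)) has_field_derivative - wpf (a + b)) (at a)"
    using DERIV_shift[of Zf "- wpf (a + b)" a b] Z_deriv[OF ab(1)] by simp
  have z2: "((\<lambda>x. Zf (x + - b)) has_field_derivative - wpf (a + - b)) (at a)"
    using DERIV_shift[of Zf "- wpf (a + - b)" a "- b"] Z_deriv[of "a + - b"] ab(2) by simp
  have dl: "((\<lambda>x. Zf (x + b) - Zf (x + - b)) has_field_derivative - wpf (a + b) - - wpf (a + - b)) (at a)"
    by (rule DERIV_diff[OF z1 z2])
  have dw: "((\<lambda>x. wpf b - wpf x) has_field_derivative 0 - wpd a) (at a)"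
    by (rule DERIV_diff[OF DERIV_const wp_deriv[OF a]])
  have dr: "((\<lambda>x. 2 * Zf b + wpd b / (wpf b - wpf x)) has_field_derivative
      0 + (0 * (wpf b - wpf a) - wpd b * (0 - wpd a)) / ((wpf b - wpf a) * (wpf b - wpf a))) (at a)"
    by (rule DERIV_add[OF DERIV_const DERIV_divide[OF DERIV_const dw W]])
  have dr': "((\<lambda>x. Zf (x + b) - Zf (x + - b)) has_field_derivative
      0 + (0 * (wpf b - wpf a) - wpd b * (0 - wpd a)) / ((wpf b - wpf a) * (wpf b - wpf a))) (at a)"
  proof (rule has_field_derivative_transform_within_open[OF dr V aV])
    fix x assume "x \<in> V"
    hence x: "x \<notin> Lt" "x + b \<notin> Lt" "x - b \<notin> Lt" by (auto simp: V_def)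
    show "2 * Zf b + wpd b / (wpf b - wpf x) = Zf (x + b) - Zf (x + - b)"
      using zeta_add[OF x(1) b x(2,3)] by simp
  qed
  have "- wpf (a + b) - - wpf (a + - b) = 0 + (0 * (wpf b - wpf a) - wpd b * (0 - wpd a)) / ((wpf b - wpf a) * (wpf b - wpf a))"
    by (rule DERIV_unique[OF dl dr'])
  moreover have "(wpf b - wpf a) * (wpf b - wpf a) = (wpf a - wpf b) ^ 2" by (simp add: power2_eq_square algebra_simps)
  ultimately show ?thesis by (simp add: mult.commute)
qed

end

lemma alg:
  fixes v P Q d Y Z A B :: complex
  assumes v: "v ^ 2 \<noteq> 1" and P: "P \<noteq> 0" and Q: "Q \<noteq> 0" and d: "d \<noteq> 0" and YZ: "Y \<noteq> Z"
    and YA: "Y \<noteq> A" and YB: "Y \<noteq> B" and ZA: "Z \<noteq> A" and ZB: "Z \<noteq> B"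
    and BA: "B - A = P * Q / d ^ 2"
  shows "((v - 1) / (v + 1) = ((Y - A) * (Z - B)) / ((Y - B) * (Z - A))) \<longleftrightarrow>
         (P * v = 2 * (d ^ 2 / Q * (Y * Z - (A + B) * (Y + Z) / 2 + A * B)) / (Y - Z))"
proof -
  define M where "M = Y * Z - (A + B) * (Y + Z) / 2 + A * B"
  have v1: "v + 1 \<noteq> 0"
  proof
    assume "v + 1 = 0" hence "v = -1" by (metis add.commute add_eq_0_iff)
    thus False using v by simp
  qed
  have Dn: "(Y - B) * (Z - A) \<noteq> 0" using YB ZA by simp
  have "((v - 1) / (v + 1) = ((Y - A) * (Z - B)) / ((Y - B) * (Z - A))) \<longleftrightarrow>
        (v - 1) * ((Y - B) * (Z - A)) = ((Y - A) * (Z - B)) * (v + 1)"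
    using v1 Dn by (simp add: frac_eq_eq)
  also have "\<dots> \<longleftrightarrow> (v - 1) * ((Y - B) * (Z - A)) - ((Y - A) * (Z - B)) * (v + 1) = 0" by simp
  also have "(v - 1) * ((Y - B) * (Z - A)) - ((Y - A) * (Z - B)) * (v + 1) = v * ((B - A) * (Y - Z)) - 2 * M"
    by (simp add: M_def algebra_simps)
  finally have L: "((v - 1) / (v + 1) = ((Y - A) * (Z - B)) / ((Y - B) * (Z - A))) \<longleftrightarrow> v * ((B - A) * (Y - Z)) = 2 * M"
    by simp
  have YZ': "Y - Z \<noteq> 0" using YZ by simp
  have "(P * v = 2 * (d ^ 2 / Q * M) / (Y - Z)) \<longleftrightarrow> P * v * (Y - Z) = 2 * (d ^ 2 / Q * M)"
    using YZ' by (simp add: eq_divide_eq mult_ac)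
  also have "\<dots> \<longleftrightarrow> P * Q / d ^ 2 * v * (Y - Z) = 2 * M"
    using Q d by (auto simp: field_simps mult_ac)
  also have "\<dots> \<longleftrightarrow> v * ((B - A) * (Y - Z)) = 2 * M" unfolding BA[symmetric] by (simp add: mult_ac)
  finally show ?thesis using L by (simp add: M_def)
qed

lemma ratio_aux: "(sp::complex) \<noteq> 0 \<Longrightarrow> sm \<noteq> 0 \<Longrightarrow> b \<noteq> 0 \<Longrightarrow> c \<noteq> 0 \<Longrightarrow> e \<noteq> 0 \<Longrightarrow>
  (sp * a / (sm * b)) / (sp * c / (sm * e)) = (a * e) / (b * c)"
  by (simp add: field_simps)

context wlat begin

lemma F_formula:
  assumes Xp: "X + \<beta> \<notin> Lt" and Xm: "X - \<beta> \<notin> Lt" and Y: "Y \<notin> Lt"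
  shows "Fsig w1 w2 X Y \<beta> = sig (X + \<beta>) ^ 2 * (wpf Y - wpf (X + \<beta>)) / (sig (X - \<beta>) ^ 2 * (wpf Y - wpf (X - \<beta>)))"
proof -
  have n: "sig (X + Y + \<beta>) * sig (X - Y + \<beta>) = sig Y ^ 2 * (sig (X + \<beta>) ^ 2 * (wpf Y - wpf (X + \<beta>)))"
    using sigma_id[OF Xp Y] by (simp add: algebra_simps)
  have d: "sig (X + Y - \<beta>) * sig (X - Y - \<beta>) = sig Y ^ 2 * (sig (X - \<beta>) ^ 2 * (wpf Y - wpf (X - \<beta>)))"
    using sigma_id[OF Xm Y] by (simp add: algebra_simps)
  have "sig Y ^ 2 \<noteq> 0" using Y sig_zero_iff by simp
  thus ?thesis unfolding Fsig_def n d by (rule mult_divide_mult_cancel_left)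
qed

lemma sig_prod_nz: "a + b \<notin> Lt \<Longrightarrow> a - b \<notin> Lt \<Longrightarrow> a \<notin> Lt \<Longrightarrow> b \<notin> Lt \<Longrightarrow> wpf b - wpf a \<noteq> 0"
proof -
  assume h: "a + b \<notin> Lt" "a - b \<notin> Lt" "a \<notin> Lt" "b \<notin> Lt"
  have "sig (a + b) * sig (a - b) \<noteq> 0" using h sig_zero_iff by simp
  thus ?thesis using sigma_id[OF h(3,4)] by auto
qed

lemma pointwise:
  assumes X: "X \<notin> Lt" and Y: "Y \<notin> Lt" and Z: "Z \<notin> Lt" and \<beta>: "\<beta> \<notin> Lt" and Q: "deriv wpf \<beta> \<noteq> 0"
    and Xb: "X + \<beta> \<notin> Lt" "X - \<beta> \<notin> Lt"
    and XY: "X + Y + \<beta> \<notin> Lt" "X + Y - \<beta> \<notin> Lt" "X - Y + \<beta> \<notin> Lt" "X - Y - \<beta> \<notin> Lt"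
    and XZ: "X + Z + \<beta> \<notin> Lt" "X + Z - \<beta> \<notin> Lt" "X - Z + \<beta> \<notin> Lt" "X - Z - \<beta> \<notin> Lt"
    and v: "v ^ 2 \<noteq> 1" and P: "deriv wpf X \<noteq> 0" and YZ: "wpf Y \<noteq> wpf Z"
  shows "((v - 1) / (v + 1) = Fsig w1 w2 X Y \<beta> / Fsig w1 w2 X Z \<beta>) \<longleftrightarrow>
         (deriv wpf X * v = 2 * rho w1 w2 (wpf Y) X (wpf Z) \<beta> / (wpf Y - wpf Z))"
proof -
  define A where "A = wpf (X + \<beta>)"
  define B where "B = wpf (X - \<beta>)"
  have dX: "deriv wpf X = wpd X" by (rule deriv_wp[OF X])
  have dB: "deriv wpf \<beta> = wpd \<beta>" by (rule deriv_wp[OF \<beta>])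
  have e1: "X + \<beta> + Y = X + Y + \<beta>" "X + \<beta> - Y = X - Y + \<beta>" "X - \<beta> + Y = X + Y - \<beta>" "X - \<beta> - Y = X - Y - \<beta>"
    "X + \<beta> + Z = X + Z + \<beta>" "X + \<beta> - Z = X - Z + \<beta>" "X - \<beta> + Z = X + Z - \<beta>" "X - \<beta> - Z = X - Z - \<beta>"
    by (simp_all add: algebra_simps)
  have YA: "wpf Y - A \<noteq> 0" unfolding A_def by (rule sig_prod_nz; (unfold e1)?; use XY Xb Y in simp)
  have YB: "wpf Y - B \<noteq> 0" unfolding B_def by (rule sig_prod_nz; (unfold e1)?; use XY Xb Y in simp)
  have ZA: "wpf Z - A \<noteq> 0" unfolding A_def by (rule sig_prod_nz; (unfold e1)?; use XZ Xb Z in simp)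
  have ZB: "wpf Z - B \<noteq> 0" unfolding B_def by (rule sig_prod_nz; (unfold e1)?; use XZ Xb Z in simp)
  have sp: "sig (X + \<beta>) ^ 2 \<noteq> 0" "sig (X - \<beta>) ^ 2 \<noteq> 0" using Xb sig_zero_iff by auto
  have "Fsig w1 w2 X Y \<beta> / Fsig w1 w2 X Z \<beta> =
     (sig (X + \<beta>) ^ 2 * (wpf Y - A) / (sig (X - \<beta>) ^ 2 * (wpf Y - B))) /
     (sig (X + \<beta>) ^ 2 * (wpf Z - A) / (sig (X - \<beta>) ^ 2 * (wpf Z - B)))"
    unfolding A_def B_def by (simp add: F_formula[OF Xb Y] F_formula[OF Xb Z])
  also have "\<dots> = ((wpf Y - A) * (wpf Z - B)) / ((wpf Y - B) * (wpf Z - A))"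
    by (rule ratio_aux[OF sp YB ZA ZB])
  finally have R: "Fsig w1 w2 X Y \<beta> / Fsig w1 w2 X Z \<beta> = ((wpf Y - A) * (wpf Z - B)) / ((wpf Y - B) * (wpf Z - A))" .
  have d: "wpf X - wpf \<beta> \<noteq> 0" using zeta_add[OF X \<beta> Xb] by auto
  have BA: "B - A = wpd X * wpd \<beta> / (wpf X - wpf \<beta>) ^ 2" unfolding A_def B_def by (rule wp_add[OF X \<beta> Xb])
  have rho: "rho w1 w2 (wpf Y) X (wpf Z) \<beta> = (wpf X - wpf \<beta>) ^ 2 / wpd \<beta> * (wpf Y * wpf Z - (A + B) * (wpf Y + wpf Z) / 2 + A * B)"
    by (simp add: rho_def dB A_def B_def)
  show ?thesis unfolding R dX rho
    by (rule alg[OF v P[unfolded dX] Q[unfolded dB] d _ YA[simplified] YB[simplified] ZA[simplified] ZB[simplified] BA])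
       (use YZ in simp)
qed

end

theorem mainTheorem15:
  fixes w1 w2 \<beta> :: complex and x :: "int \<Rightarrow> real \<Rightarrow> complex" and T :: "real set"
  assumes periods: "Im (w2 / w1) \<noteq> 0"
    and T_open: "open T"
    and smooth: "\<forall>k. smooth_on T (x k)"
    and xdot: "\<forall>k. \<forall>t\<in>T. (tdot (x k) t)^2 \<noteq> 1"
    and not_pole: "\<forall>k. \<forall>t\<in>T. x k t \<notin> lattice w1 w2"
    and wp'_nz: "\<forall>k. \<forall>t\<in>T. deriv (wp w1 w2) (x k t) \<noteq> 0"
    and generic: "generic_beta w1 w2 x T \<beta>"
    and u_distinct: "\<forall>k. \<forall>t\<in>T. wp w1 w2 (x (k + 1) t) \<noteq> wp w1 w2 (x (k - 1) t)"
  shows "(\<forall>k. \<forall>t\<in>T.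
            (tdot (x k) t - 1) / (tdot (x k) t + 1)
              = Fsig w1 w2 (x k t) (x (k + 1) t) \<beta> / Fsig w1 w2 (x k t) (x (k - 1) t) \<beta>)
     \<longleftrightarrow>
         (\<forall>k. \<forall>t\<in>T.
            tdot (\<lambda>s. wp w1 w2 (x k s)) t
              = 2 * rho w1 w2 (wp w1 w2 (x (k + 1) t)) (x k t) (wp w1 w2 (x (k - 1) t)) \<beta>
                / (wp w1 w2 (x (k + 1) t) - wp w1 w2 (x (k - 1) t)))"
proof -
  interpret wlat w1 w2 using periods by unfold_locales
  have G: "\<beta> \<notin> Lt" "deriv wpf \<beta> \<noteq> 0"
    "\<And>k t. t \<in> T \<Longrightarrow> x k t + \<beta> \<notin> Lt \<and> x k t - \<beta> \<notin> Lt"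
    "\<And>k t. t \<in> T \<Longrightarrow> x k t + x (k + 1) t + \<beta> \<notin> Lt \<and> x k t + x (k + 1) t - \<beta> \<notin> Lt \<and>
        x k t - x (k + 1) t + \<beta> \<notin> Lt \<and> x k t - x (k + 1) t - \<beta> \<notin> Lt"
    using generic unfolding generic_beta_def by auto
  have pt: "((tdot (x k) t - 1) / (tdot (x k) t + 1)
              = Fsig w1 w2 (x k t) (x (k + 1) t) \<beta> / Fsig w1 w2 (x k t) (x (k - 1) t) \<beta>) \<longleftrightarrow>
            (tdot (\<lambda>s. wp w1 w2 (x k s)) t
              = 2 * rho w1 w2 (wp w1 w2 (x (k + 1) t)) (x k t) (wp w1 w2 (x (k - 1) t)) \<beta>
                / (wp w1 w2 (x (k + 1) t) - wp w1 w2 (x (k - 1) t)))" if t: "t \<in> T" for k t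
  proof -
    define X where "X = x k t"
    define Y where "Y = x (k + 1) t"
    define Z where "Z = x (k - 1) t"
    have XL: "X \<notin> Lt" "Y \<notin> Lt" "Z \<notin> Lt" using not_pole t by (auto simp: X_def Y_def Z_def)
    have Xb: "X + \<beta> \<notin> Lt" "X - \<beta> \<notin> Lt" using G(3)[OF t, of k] by (auto simp: X_def)
    have XY: "X + Y + \<beta> \<notin> Lt" "X + Y - \<beta> \<notin> Lt" "X - Y + \<beta> \<notin> Lt" "X - Y - \<beta> \<notin> Lt"
      using G(4)[OF t, of k] by (auto simp: X_def Y_def)
    have G4: "Z + X + \<beta> \<notin> Lt \<and> Z + X - \<beta> \<notin> Lt \<and> Z - X + \<beta> \<notin> Lt \<and> Z - X - \<beta> \<notin> Lt"
      using G(4)[OF t, of "k - 1"] by (simp add: X_def Z_def)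
    have XZ: "X + Z + \<beta> \<notin> Lt" "X + Z - \<beta> \<notin> Lt" "X - Z + \<beta> \<notin> Lt" "X - Z - \<beta> \<notin> Lt"
    proof -
      have e: "X + Z + \<beta> = Z + X + \<beta>" "X + Z - \<beta> = Z + X - \<beta>" "X - Z + \<beta> = - (Z - X - \<beta>)" "X - Z - \<beta> = - (Z - X + \<beta>)"
        by (simp_all add: algebra_simps)
      show "X + Z + \<beta> \<notin> Lt" "X + Z - \<beta> \<notin> Lt" "X - Z + \<beta> \<notin> Lt" "X - Z - \<beta> \<notin> Lt"
        unfolding e lat_uminus_iff using G4 by auto
    qed
    have v: "(tdot (x k) t) ^ 2 \<noteq> 1" using xdot t by auto
    have P: "deriv wpf X \<noteq> 0" using wp'_nz t by (auto simp: X_def)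
    have YZ: "wpf Y \<noteq> wpf Z" using u_distinct t by (auto simp: Y_def Z_def)
    have dif: "x k differentiable (at t)" using smooth t unfolding smooth_on_def by (metis funpow_0)
    have dx: "(x k has_vector_derivative tdot (x k) t) (at t)"
      using dif by (simp add: tdot_def vector_derivative_works)
    have dw: "(wpf has_field_derivative wpd X) (at (x k t))" using wp_deriv[OF XL(1)] by (simp add: X_def)
    have "((wpf \<circ> x k) has_vector_derivative tdot (x k) t * wpd X) (at t)"
      by (rule field_vector_diff_chain_at[OF dx dw])
    hence td: "tdot (\<lambda>s. wpf (x k s)) t = deriv wpf X * tdot (x k) t"
      using deriv_wp[OF XL(1)] by (simp add: tdot_def o_def vector_derivative_at mult.commute)
    show ?thesis unfolding td X_def[symmetric] Y_def[symmetric] Z_def[symmetric]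
      by (rule pointwise[OF XL G(1,2) Xb XY XZ v P YZ])
  qed
  show ?thesis using pt by blast
qed


end
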